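(* Let $A\in\Omega_n$ be non-derogatory and $B\in\mathcal M_n$ with $\kappa_{\Omega_n}(A;B)=0$. Then there is a holomorphic mapping $\varphi:\mathbb C\to\Omega_n$ with $\varphi(0)=A$, $\varphi'(0)=B$, and $sp(\varphi(\lambda))=sp(A)$ for every $\lambda\in\mathbb C$.
   Context: $\mathcal M_n$ is the space of complex $n\times n$ matrices (identified with $\mathbb C^{n^2}$); $sp(A)$ is the spectrum of $A$ and $r(A)$ its spectral radius; $\Omega_n=\{A\in\mathcal M_n: r(A)<1\}$. A matrix is non-derogatory if its characteristic and minimal polynomials coincide. $\mathbb D$ is the open unit disc. For a domain $D\subset\mathbb C^m$, $\kappa_D(z;X)=\inf\{|\alpha|:\exists\varphi\in\mathcal O(\mathbb D,D),\ \varphi(0)=z,\ \alpha\varphi'(0)=X\}$ is the Kobayashi–Royden pseudometric. *)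

theory Defs
  imports "HOL-Analysis.Analysis" "Jordan_Normal_Form.Spectral_Radius"
begin

text \<open>Complex n x n matrices are JNF matrices in carrier_mat n n.
  sp(A) is spectrum A (set of eigenvalues), r(A) is spectral_radius A.\<close>

definition Omega :: "nat \<Rightarrow> complex mat set" where
  "Omega n = {A \<in> carrier_mat n n. spectral_radius A < 1}"

definition poly_at_mat :: "complex poly \<Rightarrow> complex mat \<Rightarrow> complex mat" where
  "poly_at_mat p A = mat (dim_row A) (dim_col A)
     (\<lambda>(i,j). \<Sum>k\<le>degree p. coeff p k * (A ^\<^sub>m k) $$ (i,j))"

definition minimal_poly :: "complex mat \<Rightarrow> complex poly" where
  "minimal_poly A = (THE p. lead_coeff p = 1 \<and> poly_at_mat p A = 0\<^sub>m (dim_row A) (dim_row A) \<and>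
     (\<forall>q. q \<noteq> 0 \<and> poly_at_mat q A = 0\<^sub>m (dim_row A) (dim_row A) \<longrightarrow> degree p \<le> degree q))"

definition non_derogatory :: "complex mat \<Rightarrow> bool" where
  "non_derogatory A \<longleftrightarrow> char_poly A = minimal_poly A"

text \<open>Holomorphy of a matrix-valued map (identifying M_n with C^(n^2)): all entries holomorphic.\<close>
definition mat_holomorphic_on :: "nat \<Rightarrow> (complex \<Rightarrow> complex mat) \<Rightarrow> complex set \<Rightarrow> bool" where
  "mat_holomorphic_on n \<phi> S \<longleftrightarrow> (\<forall>i<n. \<forall>j<n. (\<lambda>z. \<phi> z $$ (i,j)) holomorphic_on S)"

definition mat_deriv :: "nat \<Rightarrow> (complex \<Rightarrow> complex mat) \<Rightarrow> complex \<Rightarrow> complex mat" where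
  "mat_deriv n \<phi> z = mat n n (\<lambda>(i,j). deriv (\<lambda>w. \<phi> w $$ (i,j)) z)"

text \<open>Kobayashi--Royden pseudometric of a domain D of n x n matrices (infimum of empty set = infinity).\<close>
definition kobayashi :: "nat \<Rightarrow> complex mat set \<Rightarrow> complex mat \<Rightarrow> complex mat \<Rightarrow> ereal" where
  "kobayashi n D z X = (INF \<alpha> \<in> {\<alpha>. \<exists>\<phi>. mat_holomorphic_on n \<phi> (ball 0 1) \<and> \<phi> ` ball 0 1 \<subseteq> D \<and>
       \<phi> 0 = z \<and> \<alpha> \<cdot>\<^sub>m mat_deriv n \<phi> 0 = X}. ereal (cmod \<alpha>))"

end

theory Submission
  imports Defs "HOL-Computational_Algebra.Polynomial_Factorial" "HOL-Computational_Algebra.Field_as_Ring"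
    "HOL-Complex_Analysis.Complex_Analysis"
begin
lemma mult_entry:
  assumes "A \<in> carrier_mat n n" "B \<in> carrier_mat n n" "i < n" "j < n"
  shows "(A * B) $$ (i,j) = (\<Sum>k<n. A $$ (i,k) * B $$ (k,j))"
  using assms by (auto simp: scalar_prod_def lessThan_atLeast0)

lemma pow_add_mat:
  assumes "A \<in> carrier_mat n n"
  shows "A ^\<^sub>m (a + b) = A ^\<^sub>m a * A ^\<^sub>m b"
proof (induction b)
  case 0 then show ?case using assms by simp
next
  case (Suc b)
  then show ?case using assms by (simp add: assoc_mult_mat[of _ n n _ n _ n])
qed

lemma pow_Suc_left:
  assumes "A \<in> carrier_mat n n"
  shows "A ^\<^sub>m (Suc k) = A * A ^\<^sub>m k"
  using pow_add_mat[OF assms, of 1 k] assms by simp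

lemma pow_comm:
  assumes "A \<in> carrier_mat n n"
  shows "A ^\<^sub>m a * A ^\<^sub>m b = A ^\<^sub>m b * A ^\<^sub>m a"
  using pow_add_mat[OF assms, of a b] pow_add_mat[OF assms, of b a] by (simp add: add.commute)

lemma sum_swap_tri:
  "(\<Sum>k<n. \<Sum>m\<in>{Suc k..n}. F k m) = (\<Sum>m\<le>n. \<Sum>k<m. F k m :: 'a::comm_monoid_add)"
proof -
  have "(\<Sum>k<n. \<Sum>m\<in>{Suc k..n}. F k m) = (\<Sum>k<n. \<Sum>m\<le>n. if k < m then F k m else 0)"
  proof (rule sum.cong[OF refl])
    fix k
    have e: "{m\<in>{..n}. k<m} = {Suc k..n}" by auto
    show "(\<Sum>m\<in>{Suc k..n}. F k m) = (\<Sum>m\<le>n. if k < m then F k m else 0)"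
      using sum.inter_filter[of "{..n}" "F k" "\<lambda>m. k<m"] e by simp
  qed
  also have "\<dots> = (\<Sum>m\<le>n. \<Sum>k<n. if k < m then F k m else 0)" by (rule sum.swap)
  also have "\<dots> = (\<Sum>m\<le>n. \<Sum>k<m. F k m)"
  proof (rule sum.cong[OF refl])
    fix m assume "m \<in> {..n}"
    then have e: "{k\<in>{..<n}. k<m} = {..<m}" by auto
    then show "(\<Sum>k<n. if k < m then F k m else 0) = (\<Sum>k<m. F k m)"
      using sum.inter_filter[of "{..<n}" "\<lambda>k. F k m" "\<lambda>k. k<m"] by simp
  qed
  finally show ?thesis .
qed

definition mtr :: "nat \<Rightarrow> complex mat \<Rightarrow> complex" where
  "mtr n M = (\<Sum>i<n. M $$ (i,i))"

context
  fixes n :: nat and C :: "complex mat"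
  assumes n0: "0 < n" and Cc: "C \<in> carrier_mat n n"
    and Cs: "\<And>i k. i < n \<Longrightarrow> Suc k < n \<Longrightarrow> C $$ (i,k) = (if i = Suc k then 1 else 0)"
begin

definition cc :: "nat \<Rightarrow> complex" where
  "cc m = (if m = n then 1 else - C $$ (m, n-1))"

definition rr :: "nat \<Rightarrow> complex" where
  "rr j = (C ^\<^sub>m j) $$ (n-1, 0)"

lemma W_first_col:
  "j < n \<Longrightarrow> i < n \<Longrightarrow> (C ^\<^sub>m j) $$ (i,0) = (if i = j then 1 else 0)"
proof (induction j arbitrary: i)
  case 0 then show ?case using Cc by simp
next
  case (Suc j)
  have "(C ^\<^sub>m Suc j) $$ (i,0) = (C * C ^\<^sub>m j) $$ (i,0)" using pow_Suc_left[OF Cc] by simp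
  also have "\<dots> = (\<Sum>b<n. C $$ (i,b) * (C ^\<^sub>m j) $$ (b,0))"
    using Suc.prems Cc by (intro mult_entry) auto
  also have "\<dots> = (\<Sum>b<n. if b = j then C $$ (i,b) else 0)"
    using Suc by (intro sum.cong) auto
  also have "\<dots> = C $$ (i,j)" using Suc.prems by simp
  also have "\<dots> = (if i = Suc j then 1 else 0)" using Cs Suc.prems by simp
  finally show ?case .
qed

lemma W_shift: "l < n \<Longrightarrow> i < n \<Longrightarrow> (C ^\<^sub>m t) $$ (i,l) = (C ^\<^sub>m (t+l)) $$ (i,0)"
proof -
  assume l: "l < n" and i: "i < n"
  have "(C ^\<^sub>m (t+l)) $$ (i,0) = (\<Sum>b<n. (C ^\<^sub>m t) $$ (i,b) * (C ^\<^sub>m l) $$ (b,0))"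
    using pow_add_mat[OF Cc, of t l] mult_entry[of "C ^\<^sub>m t" n "C ^\<^sub>m l" i 0] Cc i n0 by simp
  also have "\<dots> = (\<Sum>b<n. if b = l then (C ^\<^sub>m t) $$ (i,b) else 0)"
    using W_first_col l by (intro sum.cong) auto
  also have "\<dots> = (C ^\<^sub>m t) $$ (i,l)" using l by simp
  finally show ?thesis by simp
qed

lemma rec0: "i < n \<Longrightarrow> (\<Sum>m\<le>n. cc m * (C ^\<^sub>m m) $$ (i,0)) = 0"
proof -
  assume i: "i < n"
  have Wn: "(C ^\<^sub>m n) $$ (i,0) = C $$ (i, n-1)"
  proof -
    have "C ^\<^sub>m n = C * C ^\<^sub>m (n-1)" using pow_Suc_left[OF Cc, of "n-1"] n0 by simp
    hence "(C ^\<^sub>m n) $$ (i,0) = (\<Sum>b<n. C $$ (i,b) * (C ^\<^sub>m (n-1)) $$ (b,0))"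
      using mult_entry[of C n "C ^\<^sub>m (n-1)" i 0] Cc i n0 by simp
    also have "\<dots> = (\<Sum>b<n. if b = n-1 then C $$ (i,b) else 0)"
      using W_first_col n0 by (intro sum.cong) auto
    also have "\<dots> = C $$ (i, n-1)" using n0 by simp
    finally show ?thesis .
  qed
  have "(\<Sum>m\<le>n. cc m * (C ^\<^sub>m m) $$ (i,0)) = (\<Sum>m<n. cc m * (C ^\<^sub>m m) $$ (i,0)) + cc n * (C ^\<^sub>m n) $$ (i,0)"
    by (simp add: lessThan_Suc_atMost[symmetric])
  also have "(\<Sum>m<n. cc m * (C ^\<^sub>m m) $$ (i,0)) = (\<Sum>m<n. if m = i then cc m else 0)"
    using W_first_col i by (intro sum.cong) auto
  also have "\<dots> = cc i" using i by simp
  finally show ?thesis using Wn i by (simp add: cc_def)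
qed

lemma rec: "i < n \<Longrightarrow> (\<Sum>m\<le>n. cc m * (C ^\<^sub>m (t+m)) $$ (i,0)) = 0"
proof -
  assume i: "i < n"
  have "(\<Sum>m\<le>n. cc m * (C ^\<^sub>m (t+m)) $$ (i,0)) =
        (\<Sum>m\<le>n. cc m * (\<Sum>b<n. (C ^\<^sub>m t) $$ (i,b) * (C ^\<^sub>m m) $$ (b,0)))"
    using pow_add_mat[OF Cc] mult_entry[of "C ^\<^sub>m t" n] Cc i n0 by (intro sum.cong) auto
  also have "\<dots> = (\<Sum>b<n. (C ^\<^sub>m t) $$ (i,b) * (\<Sum>m\<le>n. cc m * (C ^\<^sub>m m) $$ (b,0)))"
    by (simp add: sum_distrib_left sum_distrib_right mult_ac sum.swap[of _ "{..n}"])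
  also have "\<dots> = 0" using rec0 by simp
  finally show ?thesis .
qed

lemma rr_small: "j < n \<Longrightarrow> rr j = (if j = n-1 then 1 else 0)"
  unfolding rr_def using W_first_col[of j "n-1"] n0 by auto

lemma rr_rec: "(\<Sum>m\<le>n. cc m * rr (t+m)) = 0"
  unfolding rr_def using rec[of "n-1" t] n0 by simp

lemma Kid:
  assumes l: "l < n" and k: "k < n"
  shows "(\<Sum>m\<in>{Suc k..n}. cc m * rr (l+m-1-k)) = (if l = k then 1 else 0)"
proof (cases "l \<le> k")
  case True
  have "(\<Sum>m\<in>{Suc k..n}. cc m * rr (l+m-1-k)) = (\<Sum>m\<in>{Suc k..n}. if m = n \<and> l = k then 1 else 0)"
  proof (intro sum.cong refl)
    fix m assume m: "m \<in> {Suc k..n}"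
    have lt: "l+m-1-k < n" using m True l by auto
    show "cc m * rr (l+m-1-k) = (if m = n \<and> l = k then 1 else 0)"
      using rr_small[OF lt] m True by (auto simp: cc_def)
  qed
  also have "\<dots> = (if l = k then 1 else 0)"
    using k by (cases "l = k") (auto simp: sum.delta)
  finally show ?thesis .
next
  case False
  define t where "t = l - 1 - k"
  have split: "{..n} = {..k} \<union> {Suc k..n}" using k by auto
  have "0 = (\<Sum>m\<le>n. cc m * rr (t+m))" using rr_rec by simp
  also have "\<dots> = (\<Sum>m\<le>k. cc m * rr (t+m)) + (\<Sum>m\<in>{Suc k..n}. cc m * rr (t+m))"
    by (subst split, rule sum.union_disjoint) auto
  also have "(\<Sum>m\<le>k. cc m * rr (t+m)) = 0"
  proof (intro sum.neutral ballI)
    fix m assume "m \<in> {..k}"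
    hence "t + m < n" "t + m \<noteq> n - 1" using False l unfolding t_def by auto
    thus "cc m * rr (t+m) = 0" using rr_small by simp
  qed
  also have "(\<Sum>m\<in>{Suc k..n}. cc m * rr (t+m)) = (\<Sum>m\<in>{Suc k..n}. cc m * rr (l+m-1-k))"
    using False unfolding t_def by (intro sum.cong) auto
  finally show ?thesis using False by simp
qed

lemma dual:
  assumes k: "k < n"
  shows "f k = (\<Sum>m\<in>{Suc k..n}. cc m * (\<Sum>l<n. rr (m-1-k+l) * f l))"
proof -
  have "(\<Sum>m\<in>{Suc k..n}. cc m * (\<Sum>l<n. rr (m-1-k+l) * f l))
      = (\<Sum>l<n. f l * (\<Sum>m\<in>{Suc k..n}. cc m * rr (l+m-1-k)))"
    by (simp add: sum_distrib_left sum_distrib_right mult_ac sum.swap[of _ "{Suc k..n}"])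
      (intro sum.cong refl, auto simp: add.commute)
  also have "\<dots> = (\<Sum>l<n. if l = k then f l else 0)"
    using Kid k by (intro sum.cong) auto
  also have "\<dots> = f k" using k by simp
  finally show ?thesis by simp
qed


definition yy :: "complex mat \<Rightarrow> nat \<Rightarrow> nat \<Rightarrow> complex" where
  "yy B k a = (\<Sum>i<k. (C ^\<^sub>m (k-1-i) * B) $$ (a,i))"

definition zz :: "complex mat \<Rightarrow> nat \<Rightarrow> complex" where
  "zz B a = (\<Sum>m\<le>n. cc m * yy B m a)"

lemma rr_entry: "l < n \<Longrightarrow> rr (j+l) = (C ^\<^sub>m j) $$ (n-1, l)"
  unfolding rr_def using W_shift[of l "n-1" j] n0 by simp

lemma left_row:
  assumes M: "M \<in> carrier_mat n n" and k: "k < n"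
  shows "(\<Sum>l<n. rr (j+l) * M $$ (l,k)) = (C ^\<^sub>m j * M) $$ (n-1,k)"
  using mult_entry[of "C ^\<^sub>m j" n M "n-1" k] M k n0 Cc rr_entry by simp

lemma trace_formula:
  assumes B: "B \<in> carrier_mat n n"
  shows "mtr n (C ^\<^sub>m s * B) = (\<Sum>b<n. rr (s+b) * zz B b)"
proof -
  have diag: "(C ^\<^sub>m s * B) $$ (k,k) = (\<Sum>m\<in>{Suc k..n}. cc m * (\<Sum>b<n. rr (s+b) * (C ^\<^sub>m (m-1-k) * B) $$ (b,k)))"
    if k: "k < n" for k
  proof -
    have "(C ^\<^sub>m s * B) $$ (k,k) = (\<Sum>m\<in>{Suc k..n}. cc m * (\<Sum>l<n. rr (m-1-k+l) * (C ^\<^sub>m s * B) $$ (l,k)))"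
      by (rule dual[OF k])
    also have "\<dots> = (\<Sum>m\<in>{Suc k..n}. cc m * (\<Sum>b<n. rr (s+b) * (C ^\<^sub>m (m-1-k) * B) $$ (b,k)))"
    proof (rule sum.cong[OF refl])
      fix m
      have "(\<Sum>l<n. rr (m-1-k+l) * (C ^\<^sub>m s * B) $$ (l,k)) = (C ^\<^sub>m (m-1-k) * (C ^\<^sub>m s * B)) $$ (n-1,k)"
        by (rule left_row) (use B Cc k in auto)
      also have "C ^\<^sub>m (m-1-k) * (C ^\<^sub>m s * B) = C ^\<^sub>m s * (C ^\<^sub>m (m-1-k) * B)"
      proof -
        have "C ^\<^sub>m (m-1-k) * (C ^\<^sub>m s * B) = (C ^\<^sub>m (m-1-k) * C ^\<^sub>m s) * B"
          using B Cc by (simp add: assoc_mult_mat[of _ n n _ n B n])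
        also have "\<dots> = (C ^\<^sub>m s * C ^\<^sub>m (m-1-k)) * B" using pow_comm[OF Cc, of "m-1-k" s] by simp
        also have "\<dots> = C ^\<^sub>m s * (C ^\<^sub>m (m-1-k) * B)"
          using B Cc by (simp add: assoc_mult_mat[of _ n n _ n B n])
        finally show ?thesis .
      qed
      also have "(C ^\<^sub>m s * (C ^\<^sub>m (m-1-k) * B)) $$ (n-1,k) = (\<Sum>b<n. rr (s+b) * (C ^\<^sub>m (m-1-k) * B) $$ (b,k))"
        by (rule left_row[symmetric]) (use B Cc k in auto)
      finally show "cc m * (\<Sum>l<n. rr (m-1-k+l) * (C ^\<^sub>m s * B) $$ (l,k)) =
          cc m * (\<Sum>b<n. rr (s+b) * (C ^\<^sub>m (m-1-k) * B) $$ (b,k))" by simp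
    qed
    finally show ?thesis .
  qed
  have "mtr n (C ^\<^sub>m s * B) = (\<Sum>k<n. \<Sum>m\<in>{Suc k..n}. cc m * (\<Sum>b<n. rr (s+b) * (C ^\<^sub>m (m-1-k) * B) $$ (b,k)))"
    unfolding mtr_def using diag by (intro sum.cong) auto
  also have "\<dots> = (\<Sum>m\<le>n. \<Sum>k<m. cc m * (\<Sum>b<n. rr (s+b) * (C ^\<^sub>m (m-1-k) * B) $$ (b,k)))"
    by (rule sum_swap_tri)
  also have "\<dots> = (\<Sum>m\<le>n. \<Sum>k<m. \<Sum>b<n. cc m * (rr (s+b) * (C ^\<^sub>m (m-1-k) * B) $$ (b,k)))"
    by (simp add: sum_distrib_left)
  also have "\<dots> = (\<Sum>m\<le>n. \<Sum>b<n. \<Sum>k<m. cc m * (rr (s+b) * (C ^\<^sub>m (m-1-k) * B) $$ (b,k)))"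
    by (rule sum.cong[OF refl], rule sum.swap)
  also have "\<dots> = (\<Sum>b<n. \<Sum>m\<le>n. \<Sum>k<m. cc m * (rr (s+b) * (C ^\<^sub>m (m-1-k) * B) $$ (b,k)))"
    by (rule sum.swap)
  also have "\<dots> = (\<Sum>b<n. rr (s+b) * zz B b)"
    unfolding zz_def yy_def
    by (rule sum.cong[OF refl]) (simp add: sum_distrib_left mult_ac)
  finally show ?thesis .
qed


lemma zz_zero:
  assumes B: "B \<in> carrier_mat n n" and tr0: "\<And>s. s < n \<Longrightarrow> mtr n (C ^\<^sub>m s * B) = 0"
    and a: "a < n"
  shows "zz B a = 0"
proof -
  have "zz B a = (\<Sum>m\<in>{Suc a..n}. cc m * (\<Sum>l<n. rr (m-1-a+l) * zz B l))"
    by (rule dual[OF a])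
  also have "\<dots> = 0"
  proof (intro sum.neutral ballI)
    fix m assume m: "m \<in> {Suc a..n}"
    have "(\<Sum>l<n. rr (m-1-a+l) * zz B l) = mtr n (C ^\<^sub>m (m-1-a) * B)"
      using trace_formula[OF B, of "m-1-a"] by simp
    also have "\<dots> = 0" using tr0 m by auto
    finally show "cc m * (\<Sum>l<n. rr (m-1-a+l) * zz B l) = 0" by simp
  qed
  finally show ?thesis .
qed

lemma yy_Suc:
  assumes B: "B \<in> carrier_mat n n" and a: "a < n" and k: "k < n"
  shows "yy B (Suc k) a = B $$ (a,k) + (\<Sum>b<n. C $$ (a,b) * yy B k b)"
proof -
  have "yy B (Suc k) a = (\<Sum>i<k. (C ^\<^sub>m (k-i) * B) $$ (a,i)) + (C ^\<^sub>m 0 * B) $$ (a,k)"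
    unfolding yy_def by simp
  also have "(C ^\<^sub>m 0 * B) $$ (a,k) = B $$ (a,k)" using B Cc by simp
  also have "(\<Sum>i<k. (C ^\<^sub>m (k-i) * B) $$ (a,i)) = (\<Sum>i<k. \<Sum>b<n. C $$ (a,b) * (C ^\<^sub>m (k-1-i) * B) $$ (b,i))"
  proof (rule sum.cong[OF refl])
    fix i assume i: "i \<in> {..<k}"
    have "C ^\<^sub>m (k-i) * B = (C * C ^\<^sub>m (k-1-i)) * B"
    proof -
      have "k - i = Suc (k-1-i)" using i by auto
      then show ?thesis using pow_Suc_left[OF Cc, of "k-1-i"] by simp
    qed
    also have "\<dots> = C * (C ^\<^sub>m (k-1-i) * B)" using B Cc by (simp add: assoc_mult_mat[of _ n n _ n B n])
    moreover have "C ^\<^sub>m (k-1-i) * B \<in> carrier_mat n n" using B Cc by (meson mult_carrier_mat pow_carrier_mat)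
    ultimately show "(C ^\<^sub>m (k-i) * B) $$ (a,i) = (\<Sum>b<n. C $$ (a,b) * (C ^\<^sub>m (k-1-i) * B) $$ (b,i))"
      using mult_entry[of C n "C ^\<^sub>m (k-1-i) * B" a i] Cc a i k by simp
  qed
  also have "\<dots> = (\<Sum>b<n. C $$ (a,b) * yy B k b)"
    unfolding yy_def by (simp add: sum_distrib_left sum.swap[of _ "{..<k}"])
  finally show ?thesis by simp
qed

lemma companion_solve:
  assumes B: "B \<in> carrier_mat n n" and tr0: "\<And>s. s < n \<Longrightarrow> mtr n (C ^\<^sub>m s * B) = 0"
  shows "\<exists>X \<in> carrier_mat n n. X * C - C * X = B"
proof -
  define X where "X = mat n n (\<lambda>(a,k). yy B k a)"
  have Xc: "X \<in> carrier_mat n n" unfolding X_def by simp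
  have "X * C - C * X = B"
  proof (rule eq_matI)
    show "dim_row (X * C - C * X) = dim_row B" "dim_col (X * C - C * X) = dim_col B"
      using B Cc Xc by auto
    fix a k assume a: "a < dim_row B" and k: "k < dim_col B"
    hence a: "a < n" and k: "k < n" using B by auto
    have XC: "(X * C) $$ (a,k) = (\<Sum>b<n. yy B b a * C $$ (b,k))"
      using mult_entry[OF Xc Cc a k] a unfolding X_def by simp
    have CX: "(C * X) $$ (a,k) = (\<Sum>b<n. C $$ (a,b) * yy B k b)"
      using mult_entry[OF Cc Xc a k] k unfolding X_def by simp
    have lhs: "(X * C - C * X) $$ (a,k) = (X * C) $$ (a,k) - (C * X) $$ (a,k)"
      using Xc Cc a k by simp
    show "(X * C - C * X) $$ (a,k) = B $$ (a,k)"
    proof (cases "Suc k < n")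
      case True
      have "(X * C) $$ (a,k) = (\<Sum>b<n. if b = Suc k then yy B b a else 0)"
        unfolding XC using Cs True by (intro sum.cong) auto
      also have "\<dots> = yy B (Suc k) a" using True by simp
      finally show ?thesis using lhs CX yy_Suc[OF B a k] by simp
    next
      case False
      hence kn: "k = n - 1" using k by simp
      have "(\<Sum>b<n. yy B b a * C $$ (b,k)) = (\<Sum>b<n. - (cc b * yy B b a))"
        using kn by (intro sum.cong) (auto simp: cc_def)
      hence "(X * C) $$ (a,k) = - (\<Sum>b<n. cc b * yy B b a)"
        using XC by (simp add: sum_negf)
      moreover have "zz B a = (\<Sum>b<n. cc b * yy B b a) + yy B n a"
        unfolding zz_def by (simp add: lessThan_Suc_atMost[symmetric] cc_def)
      moreover have "yy B n a = B $$ (a,k) + (\<Sum>b<n. C $$ (a,b) * yy B k b)"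
        using yy_Suc[OF B a k] kn n0 by simp
      ultimately have h1: "(X * C - C * X) $$ (a,k) = - (\<Sum>b<n. cc b * yy B b a) - (\<Sum>b<n. C $$ (a,b) * yy B k b)"
        and h2: "B $$ (a,k) + ((\<Sum>b<n. cc b * yy B b a) + (\<Sum>b<n. C $$ (a,b) * yy B k b)) = 0"
        using lhs CX zz_zero[OF B tr0 a] by (auto simp: add.assoc, metis add.left_commute)
      from h2 have "B $$ (a,k) = - ((\<Sum>b<n. cc b * yy B b a) + (\<Sum>b<n. C $$ (a,b) * yy B k b))"
        by (simp only: eq_neg_iff_add_eq_0)
      with h1 show ?thesis by (simp add: algebra_simps) (metis add_right_cancel)
    qed
  qed
  with Xc show ?thesis by blast
qed

end

lemma cm: "A \<in> carrier_mat n n \<Longrightarrow> B \<in> carrier_mat n n \<Longrightarrow> A * B \<in> carrier_mat n n"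
  by simp

lemma inv_cancel_left: "Q \<in> carrier_mat n n \<Longrightarrow> P \<in> carrier_mat n n \<Longrightarrow> M \<in> carrier_mat n n \<Longrightarrow>
  Q * P = 1\<^sub>m n \<Longrightarrow> Q * (P * M) = (M :: 'a :: semiring_1 mat)"
  by (simp add: assoc_mult_mat[symmetric, of Q n n P n M n])

lemmas massoc = assoc_mult_mat[of _ n n _ n _ n] for n

lemma mtr_comm:
  assumes "(A :: complex mat) \<in> carrier_mat n n" "B \<in> carrier_mat n n"
  shows "mtr n (A * B) = mtr n (B * A)"
proof -
  have "mtr n (A * B) = (\<Sum>i<n. \<Sum>k<n. A $$ (i,k) * B $$ (k,i))"
    unfolding mtr_def using mult_entry[OF assms] by (intro sum.cong) auto
  also have "\<dots> = (\<Sum>k<n. \<Sum>i<n. B $$ (k,i) * A $$ (i,k))"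
    by (subst sum.swap) (simp add: mult.commute)
  also have "\<dots> = mtr n (B * A)"
    unfolding mtr_def using mult_entry[OF assms(2,1)] by (intro sum.cong) auto
  finally show ?thesis .
qed

lemma inverse_from_det:
  assumes P: "(P :: complex mat) \<in> carrier_mat n n" and d: "det P \<noteq> 0"
  shows "\<exists>Q \<in> carrier_mat n n. P * Q = 1\<^sub>m n \<and> Q * P = 1\<^sub>m n"
proof -
  define Q where "Q = (1 / det P) \<cdot>\<^sub>m adj_mat P"
  have adj: "adj_mat P \<in> carrier_mat n n" "P * adj_mat P = det P \<cdot>\<^sub>m 1\<^sub>m n" "adj_mat P * P = det P \<cdot>\<^sub>m 1\<^sub>m n"
    using adj_mat[OF P] by auto
  have Qc: "Q \<in> carrier_mat n n" unfolding Q_def using adj by simp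
  have "P * Q = (1 / det P) \<cdot>\<^sub>m (P * adj_mat P)" unfolding Q_def using mult_smult_distrib[OF P adj(1)] .
  also have "\<dots> = 1\<^sub>m n" unfolding adj(2) using d by (intro eq_matI) auto
  finally have 1: "P * Q = 1\<^sub>m n" .
  have "Q * P = (1 / det P) \<cdot>\<^sub>m (adj_mat P * P)" unfolding Q_def using mult_smult_assoc_mat[OF adj(1) P] .
  also have "\<dots> = 1\<^sub>m n" unfolding adj(3) using d by (intro eq_matI) auto
  finally have 2: "Q * P = 1\<^sub>m n" .
  show ?thesis using Qc 1 2 by blast
qed

lemma conj_pow:
  assumes A: "(A :: complex mat) \<in> carrier_mat n n" and P: "P \<in> carrier_mat n n" and Q: "Q \<in> carrier_mat n n"
    and PQ: "P * Q = 1\<^sub>m n" and QP: "Q * P = 1\<^sub>m n"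
  shows "(Q * A * P) ^\<^sub>m s = Q * A ^\<^sub>m s * P"
proof (induction s)
  case 0
  then show ?case using A P Q QP by simp
next
  case (Suc s)
  have "(Q * A * P) ^\<^sub>m Suc s = (Q * A ^\<^sub>m s * P) * (Q * A * P)" using Suc by simp
  also have "\<dots> = Q * A ^\<^sub>m s * (P * Q) * A * P"
    using A P Q by (simp add: assoc_mult_mat[of _ n n _ n _ n] cm)
  also have "\<dots> = Q * A ^\<^sub>m Suc s * P"
    using A P Q PQ by (simp add: assoc_mult_mat[of _ n n _ n _ n] cm)
  finally show ?case .
qed


lemma commutator_cyclic:
  fixes A B :: "complex mat" and v :: "complex vec"
  assumes A: "A \<in> carrier_mat n n" and v: "v \<in> carrier_vec n" and B: "B \<in> carrier_mat n n"
    and Pdef: "P = mat n n (\<lambda>(i,k). (A ^\<^sub>m k *\<^sub>v v) $ i)" and dP: "det P \<noteq> 0"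
    and tr0: "\<And>s. s < n \<Longrightarrow> mtr n (A ^\<^sub>m s * B) = 0"
  shows "\<exists>X \<in> carrier_mat n n. X * A - A * X = B"
proof (cases "n = 0")
  case True
  show ?thesis using A B True by (intro bexI[of _ B], intro eq_matI) auto
next
  case False
  hence n0: "0 < n" by simp
  have Pc: "P \<in> carrier_mat n n" unfolding Pdef by simp
  obtain Q where Qc: "Q \<in> carrier_mat n n" and PQ: "P * Q = 1\<^sub>m n" and QP: "Q * P = 1\<^sub>m n"
    using inverse_from_det[OF Pc dP] by blast
  define C where "C = Q * A * P"
  have Cc: "C \<in> carrier_mat n n" unfolding C_def using A Qc Pc by simp
  have AP: "(A * P) $$ (b,k) = P $$ (b, Suc k)" if b: "b < n" and k: "Suc k < n" for b k
  proof -
    have "(A * P) $$ (b,k) = (\<Sum>l<n. A $$ (b,l) * P $$ (l,k))" using mult_entry[OF A Pc b] k by simp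
    also have "\<dots> = (\<Sum>l<n. A $$ (b,l) * (A ^\<^sub>m k *\<^sub>v v) $ l)"
      unfolding Pdef using k by (intro sum.cong) auto
    also have "\<dots> = (A *\<^sub>v (A ^\<^sub>m k *\<^sub>v v)) $ b"
      using A v b by (auto simp: scalar_prod_def lessThan_atLeast0)
    also have "A *\<^sub>v (A ^\<^sub>m k *\<^sub>v v) = A ^\<^sub>m Suc k *\<^sub>v v"
      using pow_Suc_left[OF A, of k] assoc_mult_mat_vec[of A n n "A ^\<^sub>m k" n v] A v by simp
    also have "(A ^\<^sub>m Suc k *\<^sub>v v) $ b = P $$ (b, Suc k)" unfolding Pdef using b k by simp
    finally show ?thesis .
  qed
  have Cs: "C $$ (i,k) = (if i = Suc k then 1 else 0)" if i: "i < n" and k: "Suc k < n" for i k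
  proof -
    have "C = Q * (A * P)" unfolding C_def using A Qc Pc by (simp add: assoc_mult_mat[of _ n n _ n _ n])
    hence "C $$ (i,k) = (\<Sum>b<n. Q $$ (i,b) * (A * P) $$ (b,k))"
      using mult_entry[OF Qc _ i, of "A * P" k] A Pc k by simp
    also have "\<dots> = (\<Sum>b<n. Q $$ (i,b) * P $$ (b, Suc k))" using AP k by (intro sum.cong) auto
    also have "\<dots> = (Q * P) $$ (i, Suc k)" using mult_entry[OF Qc Pc i k] by simp
    finally show ?thesis using QP i k by simp
  qed
  define B' where "B' = Q * B * P"
  have B'c: "B' \<in> carrier_mat n n" unfolding B'_def using B Qc Pc by simp
  have tr': "mtr n (C ^\<^sub>m s * B') = 0" if "s < n" for s
  proof -
    have "C ^\<^sub>m s * B' = Q * A ^\<^sub>m s * (P * Q) * B * P"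
      unfolding C_def B'_def using conj_pow[OF A Pc Qc PQ QP, of s] A Pc Qc B
      by (simp add: assoc_mult_mat[of _ n n _ n _ n] cm)
    also have "\<dots> = Q * (A ^\<^sub>m s * B * P)"
      using PQ A Pc Qc B by (simp add: assoc_mult_mat[of _ n n _ n _ n] cm)
    finally have "mtr n (C ^\<^sub>m s * B') = mtr n (Q * (A ^\<^sub>m s * B * P))" by simp
    also have "\<dots> = mtr n ((A ^\<^sub>m s * B * P) * Q)" using A B Pc Qc by (intro mtr_comm) auto
    also have "(A ^\<^sub>m s * B * P) * Q = A ^\<^sub>m s * B"
      using PQ A Pc Qc B by (simp add: assoc_mult_mat[of _ n n _ n _ n] cm)
    finally show ?thesis using tr0 that by simp
  qed
  obtain X' where X'c: "X' \<in> carrier_mat n n" and X': "X' * C - C * X' = B'"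
    using companion_solve[OF n0 Cc Cs B'c tr'] by blast
  define X where "X = P * X' * Q"
  have Xc: "X \<in> carrier_mat n n" unfolding X_def using X'c Pc Qc by simp
  have "P * C * Q = (P * Q) * A * (P * Q)"
    unfolding C_def using A Pc Qc by (simp add: assoc_mult_mat[of _ n n _ n _ n] cm)
  hence Aeq: "A = P * C * Q" using PQ A by simp
  have "X * A = P * (X' * C) * Q"
    unfolding X_def Aeq using QP X'c Cc Pc Qc by (simp add: assoc_mult_mat[of _ n n _ n _ n] cm inv_cancel_left)
  moreover have "A * X = P * (C * X') * Q"
    unfolding X_def Aeq using QP X'c Cc Pc Qc by (simp add: assoc_mult_mat[of _ n n _ n _ n] cm inv_cancel_left)
  ultimately have "X * A - A * X = P * (X' * C) * Q - P * (C * X') * Q" by simp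
  also have "\<dots> = P * (X' * C - C * X') * Q"
  proof -
    have e1: "P * (X' * C - C * X') = P * (X' * C) - P * (C * X')"
      by (rule mult_minus_distrib_mat) (use X'c Cc Pc in auto)
    have e2: "(P * (X' * C) - P * (C * X')) * Q = P * (X' * C) * Q - P * (C * X') * Q"
      by (rule minus_mult_distrib_mat) (use X'c Cc Pc Qc in auto)
    show ?thesis using e1 e2 by simp
  qed
  also have "\<dots> = B" unfolding X' B'_def
    using PQ B Pc Qc by (simp add: assoc_mult_mat[of _ n n _ n _ n] cm inv_cancel_left)
  finally show ?thesis using Xc by blast
qed

lemma pam_sum:
  assumes A: "A \<in> carrier_mat n n" and N: "degree p \<le> N"
  shows "poly_at_mat p A = mat n n (\<lambda>(i,j). \<Sum>k\<le>N. coeff p k * (A ^\<^sub>m k) $$ (i,j))"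
proof -
  have "(\<Sum>k\<le>degree p. coeff p k * (A ^\<^sub>m k) $$ (i,j)) = (\<Sum>k\<le>N. coeff p k * (A ^\<^sub>m k) $$ (i,j))" for i j
    by (rule sum.mono_neutral_left) (use N in \<open>auto simp: coeff_eq_0\<close>)
  then show ?thesis unfolding poly_at_mat_def using A by auto
qed

lemma pam_dims[simp]: "dim_row (poly_at_mat p A) = dim_row A" "dim_col (poly_at_mat p A) = dim_col A"
  unfolding poly_at_mat_def by auto

lemma pam_carrier[simp]: "A \<in> carrier_mat n n \<Longrightarrow> poly_at_mat p A \<in> carrier_mat n n"
  unfolding poly_at_mat_def by auto

lemma pam_entry:
  assumes A: "A \<in> carrier_mat n n" and N: "degree p \<le> N" and i: "i < n" and j: "j < n"
  shows "poly_at_mat p A $$ (i,j) = (\<Sum>k\<le>N. coeff p k * (A ^\<^sub>m k) $$ (i,j))"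
  using pam_sum[OF A N] i j by simp

lemma pam_0[simp]: "A \<in> carrier_mat n n \<Longrightarrow> poly_at_mat 0 A = 0\<^sub>m n n"
  unfolding poly_at_mat_def by (intro eq_matI) auto

lemma pam_pCons:
  assumes A: "A \<in> carrier_mat n n"
  shows "poly_at_mat (pCons a p) A = a \<cdot>\<^sub>m 1\<^sub>m n + A * poly_at_mat p A"
proof (rule eq_matI)
  fix i j assume "i < dim_row (a \<cdot>\<^sub>m 1\<^sub>m n + A * poly_at_mat p A)" "j < dim_col (a \<cdot>\<^sub>m 1\<^sub>m n + A * poly_at_mat p A)"
  hence i: "i < n" and j: "j < n" using A by auto
  define N where "N = degree p"
  have dN: "degree (pCons a p) \<le> Suc N" unfolding N_def by (simp add: degree_pCons_le)
  have "poly_at_mat (pCons a p) A $$ (i,j) = (\<Sum>k\<le>Suc N. coeff (pCons a p) k * (A ^\<^sub>m k) $$ (i,j))"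
    by (rule pam_entry[OF A dN i j])
  also have "\<dots> = a * (A ^\<^sub>m 0) $$ (i,j) + (\<Sum>k\<le>N. coeff p k * (A ^\<^sub>m Suc k) $$ (i,j))"
    by (subst sum.atMost_Suc_shift) simp
  also have "(\<Sum>k\<le>N. coeff p k * (A ^\<^sub>m Suc k) $$ (i,j)) = (\<Sum>k\<le>N. coeff p k * (\<Sum>b<n. A $$ (i,b) * (A ^\<^sub>m k) $$ (b,j)))"
    using pow_Suc_left[OF A] mult_entry[OF A _ i j] A by (intro sum.cong) auto
  also have "\<dots> = (\<Sum>b<n. A $$ (i,b) * (\<Sum>k\<le>N. coeff p k * (A ^\<^sub>m k) $$ (b,j)))"
    by (simp add: sum_distrib_left mult_ac sum.swap[of _ "{..N}"])
  also have "\<dots> = (A * poly_at_mat p A) $$ (i,j)"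
  proof -
    have "(A * poly_at_mat p A) $$ (i,j) = (\<Sum>b<n. A $$ (i,b) * poly_at_mat p A $$ (b,j))"
      by (rule mult_entry[OF A pam_carrier[OF A] i j])
    also have "\<dots> = (\<Sum>b<n. A $$ (i,b) * (\<Sum>k\<le>N. coeff p k * (A ^\<^sub>m k) $$ (b,j)))"
      unfolding N_def by (intro sum.cong refl) (simp add: pam_entry[OF A order.refl _ j])
    finally show ?thesis by simp
  qed
  finally show "poly_at_mat (pCons a p) A $$ (i,j) = (a \<cdot>\<^sub>m 1\<^sub>m n + A * poly_at_mat p A) $$ (i,j)"
    using A i j by simp
qed (use A in auto)

lemma pam_add:
  assumes A: "A \<in> carrier_mat n n"
  shows "poly_at_mat (p + q) A = poly_at_mat p A + poly_at_mat q A"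
proof (rule eq_matI)
  fix i j assume "i < dim_row (poly_at_mat p A + poly_at_mat q A)" "j < dim_col (poly_at_mat p A + poly_at_mat q A)"
  hence i: "i < n" and j: "j < n" using A by auto
  define N where "N = max (degree p) (degree q)"
  have N: "degree (p+q) \<le> N" "degree p \<le> N" "degree q \<le> N" unfolding N_def
    by (auto simp: degree_add_le)
  show "poly_at_mat (p + q) A $$ (i,j) = (poly_at_mat p A + poly_at_mat q A) $$ (i,j)"
    using pam_entry[OF A N(1) i j] pam_entry[OF A N(2) i j] pam_entry[OF A N(3) i j] A i j
    by (simp add: sum.distrib algebra_simps)
qed (use A in auto)

lemma pam_smult:
  assumes A: "A \<in> carrier_mat n n"
  shows "poly_at_mat (Polynomial.smult c p) A = c \<cdot>\<^sub>m poly_at_mat p A"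
proof (rule eq_matI)
  fix i j assume "i < dim_row (c \<cdot>\<^sub>m poly_at_mat p A)" "j < dim_col (c \<cdot>\<^sub>m poly_at_mat p A)"
  hence i: "i < n" and j: "j < n" using A by auto
  have N: "degree (Polynomial.smult c p) \<le> degree p" by simp
  show "poly_at_mat (Polynomial.smult c p) A $$ (i,j) = (c \<cdot>\<^sub>m poly_at_mat p A) $$ (i,j)"
    using pam_entry[OF A N i j] pam_entry[OF A order.refl i j] A i j
    by (simp add: sum_distrib_left mult_ac)
qed (use A in auto)

lemma pam_mult:
  assumes A: "A \<in> carrier_mat n n"
  shows "poly_at_mat (p * q) A = poly_at_mat p A * poly_at_mat q A"
proof (induction p)
  case 0
  then show ?case using A by (simp add: left_mult_zero_mat[of _ n n])
next
  case (pCons a p)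
  have "poly_at_mat (pCons a p * q) A = poly_at_mat (Polynomial.smult a q + pCons 0 (p * q)) A" by simp
  also have "\<dots> = a \<cdot>\<^sub>m poly_at_mat q A + A * (poly_at_mat p A * poly_at_mat q A)"
  proof -
    have z: "0 \<cdot>\<^sub>m 1\<^sub>m n = (0\<^sub>m n n :: complex mat)" by (intro eq_matI) auto
    show ?thesis using pam_add[OF A] pam_smult[OF A] pam_pCons[OF A] pCons.IH z A by (simp add: left_add_zero_mat[of _ n n] cm)
  qed
  also have "\<dots> = (a \<cdot>\<^sub>m 1\<^sub>m n + A * poly_at_mat p A) * poly_at_mat q A"
    using A by (simp add: add_mult_distrib_mat[of _ n n _ _ n] assoc_mult_mat[of _ n n _ n _ n]
        mult_smult_assoc_mat[of _ n n _ n])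
  also have "\<dots> = poly_at_mat (pCons a p) A * poly_at_mat q A" using pam_pCons[OF A] by simp
  finally show ?case .
qed


lemma pam_diff:
  assumes A: "A \<in> carrier_mat n n"
  shows "poly_at_mat (p - q) A = poly_at_mat p A - poly_at_mat q A"
proof -
  have "poly_at_mat (p - q) A = poly_at_mat (p + Polynomial.smult (-1) q) A" by simp
  also have "\<dots> = poly_at_mat p A + (-1) \<cdot>\<^sub>m poly_at_mat q A"
    by (simp only: pam_add[OF A] pam_smult[OF A])
  also have "\<dots> = poly_at_mat p A - poly_at_mat q A" using A by (intro eq_matI) auto
  finally show ?thesis .
qed

lemma pam_mat_vec:
  assumes A: "A \<in> carrier_mat n n" and v: "v \<in> carrier_vec n" and N: "degree p \<le> N" and i: "i < n"
  shows "(poly_at_mat p A *\<^sub>v v) $ i = (\<Sum>k\<le>N. coeff p k * (A ^\<^sub>m k *\<^sub>v v) $ i)"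
proof -
  have "(poly_at_mat p A *\<^sub>v v) $ i = (\<Sum>j<n. poly_at_mat p A $$ (i,j) * v $ j)"
    using A v i by (auto simp: scalar_prod_def lessThan_atLeast0)
  also have "\<dots> = (\<Sum>j<n. (\<Sum>k\<le>N. coeff p k * (A ^\<^sub>m k) $$ (i,j)) * v $ j)"
    using pam_entry[OF A N i] by simp
  also have "\<dots> = (\<Sum>k\<le>N. coeff p k * (\<Sum>j<n. (A ^\<^sub>m k) $$ (i,j) * v $ j))"
    by (simp add: sum_distrib_left sum_distrib_right mult_ac sum.swap[of _ "{..<n}"])
  also have "\<dots> = (\<Sum>k\<le>N. coeff p k * (A ^\<^sub>m k *\<^sub>v v) $ i)"
    using A v i by (auto simp: scalar_prod_def lessThan_atLeast0)
  finally show ?thesis .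
qed

lemma annih_col:
  assumes A: "A \<in> carrier_mat n n" and i: "i < n"
  shows "\<exists>q. q \<noteq> 0 \<and> (\<forall>a<n. poly_at_mat q A $$ (a,i) = 0)"
proof -
  define M where "M = mat (Suc n) (Suc n) (\<lambda>(a,k). if a < n then (A ^\<^sub>m k) $$ (a,i) else (0::complex))"
  have Mc: "M \<in> carrier_mat (Suc n) (Suc n)" unfolding M_def by simp
  have "det M = 0"
  proof -
    have "det M = (\<Sum> p \<in> {p. p permutes {0 ..< Suc n}}. signof p * (\<Prod> a = 0 ..< Suc n. M $$ (a, p a)))"
      by (rule det_def'[OF Mc])
    also have "\<dots> = 0"
    proof (intro sum.neutral ballI)
      fix p assume p: "p \<in> {p. p permutes {0 ..< Suc n}}"
      have "p n < Suc n" using p permutes_in_image[of p "{0..<Suc n}" n] by auto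
      hence "M $$ (n, p n) = 0" unfolding M_def by simp
      hence "(\<Prod> a = 0 ..< Suc n. M $$ (a, p a)) = 0" by (intro prod_zero) auto
      thus "signof p * (\<Prod> a = 0 ..< Suc n. M $$ (a, p a)) = 0" by simp
    qed
    finally show ?thesis .
  qed
  then obtain c where c: "c \<in> carrier_vec (Suc n)" "c \<noteq> 0\<^sub>v (Suc n)" "M *\<^sub>v c = 0\<^sub>v (Suc n)"
    using det_0_iff_vec_prod_zero[OF Mc] by blast
  define q where "q = Poly (list_of_vec c)"
  have cq: "coeff q k = (if k < Suc n then c $ k else 0)" for k
    unfolding q_def using c(1) by (auto simp: nth_default_def)
  have "q \<noteq> 0"
  proof
    assume "q = 0"
    hence "c $ k = 0" if "k < Suc n" for k using cq[of k] that by simp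
    hence "c = 0\<^sub>v (Suc n)" using c(1) by (intro eq_vecI) auto
    thus False using c(2) by simp
  qed
  moreover have "poly_at_mat q A $$ (a,i) = 0" if a: "a < n" for a
  proof -
    have dq: "degree q \<le> Suc n" unfolding q_def using degree_Poly[of "list_of_vec c"] c(1) by simp
    have "poly_at_mat q A $$ (a,i) = (\<Sum>k\<le>Suc n. coeff q k * (A ^\<^sub>m k) $$ (a,i))"
      by (rule pam_entry[OF A dq a i])
    also have "\<dots> = (\<Sum>k\<le>n. coeff q k * (A ^\<^sub>m k) $$ (a,i))"
      by (simp add: sum.atMost_Suc cq)
    also have "\<dots> = (\<Sum>k<Suc n. c $ k * (A ^\<^sub>m k) $$ (a,i))"
      by (subst lessThan_Suc_atMost, intro sum.cong) (auto simp: cq)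
    also have "\<dots> = (M *\<^sub>v c) $ a"
      using c(1) a unfolding M_def by (auto simp: scalar_prod_def lessThan_atLeast0 mult.commute)
    also have "\<dots> = 0" using c(3) a by simp
    finally show ?thesis .
  qed
  ultimately show ?thesis by blast
qed

lemma annih_exists:
  assumes A: "A \<in> carrier_mat n n"
  shows "\<exists>q. q \<noteq> 0 \<and> poly_at_mat q A = 0\<^sub>m n n"
proof -
  have "\<forall>i\<in>{..<n}. \<exists>q. q \<noteq> 0 \<and> (\<forall>a<n. poly_at_mat q A $$ (a,i) = 0)"
    using annih_col[OF A] by blast
  then obtain Qf where Qf: "\<And>i. i < n \<Longrightarrow> Qf i \<noteq> 0 \<and> (\<forall>a<n. poly_at_mat (Qf i) A $$ (a,i) = 0)"
    by (metis lessThan_iff)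
  define q where "q = (\<Prod>i<n. Qf i)"
  have "q \<noteq> 0" unfolding q_def using Qf by (auto simp: prod_zero_iff)
  moreover have "poly_at_mat q A = 0\<^sub>m n n"
  proof (rule eq_matI)
    fix a j assume "a < dim_row (0\<^sub>m n n :: complex mat)" "j < dim_col (0\<^sub>m n n :: complex mat)"
    hence a: "a < n" and j: "j < n" by auto
    define R where "R = (\<Prod>i\<in>{..<n}-{j}. Qf i)"
    have "q = R * Qf j" unfolding q_def R_def using j by (simp add: prod.remove mult.commute)
    hence "poly_at_mat q A = poly_at_mat R A * poly_at_mat (Qf j) A" using pam_mult[OF A] by simp
    hence "poly_at_mat q A $$ (a,j) = (\<Sum>b<n. poly_at_mat R A $$ (a,b) * poly_at_mat (Qf j) A $$ (b,j))"
      using mult_entry[OF pam_carrier[OF A] pam_carrier[OF A] a j] by simp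
    also have "\<dots> = 0" using Qf[OF j] by simp
    finally show "poly_at_mat q A $$ (a,j) = 0\<^sub>m n n $$ (a,j)" using a j by simp
  qed (use A in auto)
  ultimately show ?thesis by blast
qed

lemma minimal_poly_spec:
  assumes A: "A \<in> carrier_mat n n"
  shows "lead_coeff (minimal_poly A) = 1 \<and> poly_at_mat (minimal_poly A) A = 0\<^sub>m n n \<and>
     (\<forall>q. q \<noteq> 0 \<and> poly_at_mat q A = 0\<^sub>m n n \<longrightarrow> degree (minimal_poly A) \<le> degree q)"
proof -
  let ?P = "\<lambda>p. lead_coeff p = 1 \<and> poly_at_mat p A = 0\<^sub>m (dim_row A) (dim_row A) \<and>
     (\<forall>q. q \<noteq> 0 \<and> poly_at_mat q A = 0\<^sub>m (dim_row A) (dim_row A) \<longrightarrow> degree p \<le> degree q)"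
  have dr: "dim_row A = n" using A by simp
  obtain q0 where q0: "q0 \<noteq> 0" "poly_at_mat q0 A = 0\<^sub>m n n" using annih_exists[OF A] by blast
  obtain p0 where p0: "p0 \<noteq> 0 \<and> poly_at_mat p0 A = 0\<^sub>m n n"
    and p0min: "\<And>q. q \<noteq> 0 \<and> poly_at_mat q A = 0\<^sub>m n n \<Longrightarrow> degree p0 \<le> degree q"
    using ex_has_least_nat[of "\<lambda>q. q \<noteq> 0 \<and> poly_at_mat q A = 0\<^sub>m n n" q0 degree] q0 by blast
  define m0 where "m0 = Polynomial.smult (1 / lead_coeff p0) p0"
  have l0: "lead_coeff p0 \<noteq> 0" using p0 by simp
  have Pm0: "?P m0"
  proof (intro conjI allI impI)
    show "lead_coeff m0 = 1" unfolding m0_def using l0 by (simp add: lead_coeff_smult)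
    show "poly_at_mat m0 A = 0\<^sub>m (dim_row A) (dim_row A)"
      unfolding m0_def pam_smult[OF A] using p0 dr by (intro eq_matI) auto
    fix q assume "q \<noteq> 0 \<and> poly_at_mat q A = 0\<^sub>m (dim_row A) (dim_row A)"
    then show "degree m0 \<le> degree q" unfolding m0_def using p0min l0 dr by simp
  qed
  have uniq: "p1 = p2" if p1: "?P p1" and p2: "?P p2" for p1 p2
  proof (rule ccontr)
    assume ne: "p1 \<noteq> p2"
    have nz: "p1 \<noteq> 0" "p2 \<noteq> 0" using p1 p2 by auto
    have deq: "degree p1 = degree p2" using p1 p2 nz by (simp add: le_antisym)
    define r where "r = p1 - p2"
    have rnz: "r \<noteq> 0" using ne unfolding r_def by simp
    have "poly_at_mat r A = 0\<^sub>m n n" unfolding r_def pam_diff[OF A] using p1 p2 dr by (intro eq_matI) auto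
    hence le: "degree p1 \<le> degree r" using p1 rnz dr by simp
    have dr1: "degree r \<le> degree p1" unfolding r_def using deq by (simp add: degree_diff_le)
    have "coeff r (degree p1) = 0" unfolding r_def using p1 p2 deq by simp
    hence "degree r \<noteq> degree p1" using rnz by (metis leading_coeff_0_iff)
    thus False using le dr1 by simp
  qed
  have ex: "\<exists>!p. ?P p"
    by (rule ex1I[of ?P m0], rule Pm0, rule uniq, assumption, rule Pm0)
  have "?P (minimal_poly A)"
    unfolding minimal_poly_def by (rule theI'[OF ex])
  thus ?thesis using dr by simp
qed

lemma nonderog_props:
  assumes A: "A \<in> carrier_mat n n" and nd: "non_derogatory A"
  shows "poly_at_mat (char_poly A) A = 0\<^sub>m n n"
    and "\<And>q. q \<noteq> 0 \<Longrightarrow> poly_at_mat q A = 0\<^sub>m n n \<Longrightarrow> n \<le> degree q"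
  using minimal_poly_spec[OF A] nd degree_monic_char_poly[OF A] unfolding non_derogatory_def
  by auto

lemma finite_monic_divisors:
  assumes m: "(m :: complex poly) \<noteq> 0"
  shows "finite {d. d dvd m \<and> lead_coeff d = 1}"
proof -
  define R where "R = {z. poly m z = 0}"
  have Rf: "finite R" unfolding R_def using poly_roots_finite[OF m] .
  define G where "G = (\<lambda>f. \<Prod>z\<in>R. [:-z,1:] ^ f z)"
  define F where "F = {f. \<forall>z. (z \<in> R \<longrightarrow> f z \<in> {0..degree m}) \<and> (z \<notin> R \<longrightarrow> f z = (0::nat))}"
  have Ff: "finite F" unfolding F_def by (rule finite_set_of_finite_funs[OF Rf]) simp
  have "{d. d dvd m \<and> lead_coeff d = 1} \<subseteq> G ` F"
  proof
    fix d assume "d \<in> {d. d dvd m \<and> lead_coeff d = 1}"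
    hence dm: "d dvd m" and l: "lead_coeff d = 1" by auto
    have d0: "d \<noteq> 0" using l by auto
    have roots: "{z. poly d z = 0} \<subseteq> R"
      unfolding R_def using dm by (auto elim!: dvdE)
    define f where "f = (\<lambda>z. if z \<in> R then order z d else 0)"
    have "f \<in> F" unfolding F_def f_def
      using order_degree[OF d0] dvd_imp_degree_le[OF dm m] by (auto intro: le_trans)
    moreover have "d = G f"
    proof -
      have "d = (\<Prod>z|poly d z = 0. [:-z, 1:] ^ order z d)"
        using complex_poly_decompose[of d] l by simp
      also have "\<dots> = (\<Prod>z\<in>R. [:-z, 1:] ^ order z d)"
        by (rule prod.mono_neutral_left[OF Rf roots]) (auto simp: order_0I)
      also have "\<dots> = G f" unfolding G_def f_def by (intro prod.cong) auto
      finally show ?thesis .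
    qed
    ultimately show "d \<in> G ` F" by blast
  qed
  thus ?thesis using finite_imageI[OF Ff] finite_subset by blast
qed

lemma poly_sum_upto:
  assumes "degree (p :: complex poly) \<le> N"
  shows "poly p x = (\<Sum>k\<le>N. coeff p k * x ^ k)"
proof -
  have "poly p x = (\<Sum>k\<le>degree p. coeff p k * x ^ k)" by (rule poly_altdef)
  also have "\<dots> = (\<Sum>k\<le>N. coeff p k * x ^ k)"
    by (rule sum.mono_neutral_left) (use assms in \<open>auto simp: coeff_eq_0\<close>)
  finally show ?thesis .
qed

definition vl :: "nat \<Rightarrow> complex \<Rightarrow> complex vec" where
  "vl n z = vec n (\<lambda>k. z ^ k)"

lemma bad_finite:
  assumes A: "A \<in> carrier_mat n n" and M0: "poly_at_mat d A \<noteq> 0\<^sub>m n n"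
  shows "finite {z. poly_at_mat d A *\<^sub>v vl n z = 0\<^sub>v n}"
proof -
  let ?M = "poly_at_mat d A"
  have Mc: "?M \<in> carrier_mat n n" using A by simp
  obtain i j where i: "i < n" and j: "j < n" and nz: "?M $$ (i,j) \<noteq> 0"
    using M0 Mc by (metis (no_types, lifting) carrier_matD eq_matI index_zero_mat(1-3))
  define p where "p = Poly (map (\<lambda>k. ?M $$ (i,k)) [0..<n])"
  have cp: "coeff p k = (if k < n then ?M $$ (i,k) else 0)" for k
    unfolding p_def by (auto simp: nth_default_def)
  have p0: "p \<noteq> 0" using cp[of j] j nz by auto
  have dp: "degree p \<le> n" unfolding p_def using degree_Poly[of "map (\<lambda>k. ?M $$ (i,k)) [0..<n]"] by simp
  have "{z. ?M *\<^sub>v vl n z = 0\<^sub>v n} \<subseteq> {z. poly p z = 0}"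
  proof
    fix z assume "z \<in> {z. ?M *\<^sub>v vl n z = 0\<^sub>v n}"
    hence "(?M *\<^sub>v vl n z) $ i = 0" using i by simp
    moreover have "(?M *\<^sub>v vl n z) $ i = (\<Sum>k<n. ?M $$ (i,k) * z ^ k)"
      using carrier_matD[OF Mc] i by (auto simp: vl_def scalar_prod_def lessThan_atLeast0)
    moreover have "poly p z = (\<Sum>k<n. ?M $$ (i,k) * z ^ k)"
    proof -
      have "poly p z = (\<Sum>k\<le>n. coeff p k * z ^ k)" by (rule poly_sum_upto[OF dp])
      also have "\<dots> = (\<Sum>k<n. coeff p k * z ^ k)" by (simp add: lessThan_Suc_atMost[symmetric] cp)
      also have "\<dots> = (\<Sum>k<n. ?M $$ (i,k) * z ^ k)" by (intro sum.cong) (auto simp: cp)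
      finally show ?thesis .
    qed
    ultimately show "z \<in> {z. poly p z = 0}" by simp
  qed
  thus ?thesis using poly_roots_finite[OF p0] finite_subset by blast
qed

lemma cyclic_exists:
  assumes A: "A \<in> carrier_mat n n" and nd: "non_derogatory A"
  shows "\<exists>z. \<forall>q. q \<noteq> 0 \<longrightarrow> degree q < n \<longrightarrow> poly_at_mat q A *\<^sub>v vl n z \<noteq> 0\<^sub>v n"
proof -
  define m where "m = char_poly A"
  have m0: "m \<noteq> 0" unfolding m_def using degree_monic_char_poly[OF A] by auto
  have mA: "poly_at_mat m A = 0\<^sub>m n n" unfolding m_def by (rule nonderog_props(1)[OF A nd])
  define D where "D = {d. d dvd m \<and> lead_coeff d = 1 \<and> degree d < n}"
  have Df: "finite D" unfolding D_def
    by (rule finite_subset[OF _ finite_monic_divisors[OF m0]]) auto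
  have fin: "finite (\<Union>d\<in>D. {z. poly_at_mat d A *\<^sub>v vl n z = 0\<^sub>v n})"
  proof (rule finite_UN_I[OF Df])
    fix d assume "d \<in> D"
    hence "d \<noteq> 0" "degree d < n" unfolding D_def by auto
    hence "poly_at_mat d A \<noteq> 0\<^sub>m n n" using nonderog_props(2)[OF A nd, of d] by auto
    thus "finite {z. poly_at_mat d A *\<^sub>v vl n z = 0\<^sub>v n}" by (rule bad_finite[OF A])
  qed
  obtain z where z: "z \<notin> (\<Union>d\<in>D. {z. poly_at_mat d A *\<^sub>v vl n z = 0\<^sub>v n})"
    using ex_new_if_finite[OF infinite_UNIV_char_0 fin] by auto
  have "poly_at_mat q A *\<^sub>v vl n z \<noteq> 0\<^sub>v n" if q0: "q \<noteq> 0" and dq: "degree q < n" for q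
  proof
    assume qv: "poly_at_mat q A *\<^sub>v vl n z = 0\<^sub>v n"
    define g where "g = gcd q m"
    have g0: "g \<noteq> 0" unfolding g_def using q0 by simp
    have lg: "lead_coeff g = 1"
      using unit_factor_gcd[of q m] q0 unfolding g_def by (simp add: unit_factor_poly_def, metis one_pCons pCons_eq_iff)
    have gd: "g dvd m" unfolding g_def by simp
    have dg: "degree g < n" using dvd_imp_degree_le[of g q] q0 dq unfolding g_def by simp
    have gD: "g \<in> D" unfolding D_def using lg gd dg by simp
    obtain a b where ab: "a * q + b * m = g"
      using bezout_coefficients_fst_snd[of q m] unfolding g_def by blast
    have vc: "vl n z \<in> carrier_vec n" unfolding vl_def by simp
    have "poly_at_mat g A = poly_at_mat a A * poly_at_mat q A + poly_at_mat b A * poly_at_mat m A"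
      using ab pam_add[OF A] pam_mult[OF A] by metis
    also have "\<dots> = poly_at_mat a A * poly_at_mat q A" using mA A
      by (simp add: right_mult_zero_mat[of _ n n] cm)
    finally have "poly_at_mat g A *\<^sub>v vl n z = poly_at_mat a A *\<^sub>v (poly_at_mat q A *\<^sub>v vl n z)"
      using A vc assoc_mult_mat_vec[of "poly_at_mat a A" n n "poly_at_mat q A" n "vl n z"] by simp
    also have "\<dots> = 0\<^sub>v n" unfolding qv using A by (intro eq_vecI) auto
    finally show False using z gD by blast
  qed
  thus ?thesis by blast
qed

lemma cyclic_det:
  assumes A: "A \<in> carrier_mat n n" and v: "v \<in> carrier_vec n"
    and cyc: "\<And>q. q \<noteq> 0 \<Longrightarrow> degree q < n \<Longrightarrow> poly_at_mat q A *\<^sub>v v \<noteq> 0\<^sub>v n"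
  shows "det (mat n n (\<lambda>(i,k). (A ^\<^sub>m k *\<^sub>v v) $ i)) \<noteq> 0"
proof
  define P where "P = mat n n (\<lambda>(i,k). (A ^\<^sub>m k *\<^sub>v v) $ i)"
  have Pc: "P \<in> carrier_mat n n" unfolding P_def by simp
  assume "det (mat n n (\<lambda>(i,k). (A ^\<^sub>m k *\<^sub>v v) $ i)) = 0"
  hence "det P = 0" unfolding P_def .
  then obtain c where c: "c \<in> carrier_vec n" "c \<noteq> 0\<^sub>v n" "P *\<^sub>v c = 0\<^sub>v n"
    using det_0_iff_vec_prod_zero[OF Pc] by blast
  define q where "q = Poly (list_of_vec c)"
  have cq: "coeff q k = (if k < n then c $ k else 0)" for k
    unfolding q_def using c(1) by (auto simp: nth_default_def)
  have q0: "q \<noteq> 0"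
  proof
    assume "q = 0"
    hence "c $ k = 0" if "k < n" for k using cq[of k] that by simp
    hence "c = 0\<^sub>v n" using c(1) by (intro eq_vecI) auto
    thus False using c(2) by simp
  qed
  have dq: "degree q \<le> n" unfolding q_def using degree_Poly[of "list_of_vec c"] c(1) by simp
  have dq': "degree q < n"
  proof (rule ccontr)
    assume "\<not> degree q < n"
    hence "degree q = n" using dq by simp
    hence "lead_coeff q = 0" using cq by simp
    thus False using q0 by simp
  qed
  have "poly_at_mat q A *\<^sub>v v = 0\<^sub>v n"
  proof (rule eq_vecI)
    fix i assume "i < dim_vec (0\<^sub>v n :: complex vec)"
    hence i: "i < n" by simp
    have "(poly_at_mat q A *\<^sub>v v) $ i = (\<Sum>k\<le>n. coeff q k * (A ^\<^sub>m k *\<^sub>v v) $ i)"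
      by (rule pam_mat_vec[OF A v dq i])
    also have "\<dots> = (\<Sum>k<n. c $ k * (A ^\<^sub>m k *\<^sub>v v) $ i)"
      by (simp add: lessThan_Suc_atMost[symmetric] cq)
    also have "\<dots> = (P *\<^sub>v c) $ i"
      using i c(1) unfolding P_def by (auto simp: scalar_prod_def lessThan_atLeast0 mult.commute)
    also have "\<dots> = 0" using c(3) i by simp
    finally show "(poly_at_mat q A *\<^sub>v v) $ i = 0\<^sub>v n $ i" using i by simp
  qed (use A in simp)
  thus False using cyc[OF q0 dq'] by simp
qed

lemma ut_pow:
  assumes T: "T \<in> carrier_mat n n" and ut: "upper_triangular T"
  shows "upper_triangular (T ^\<^sub>m k) \<and> (\<forall>i<n. (T ^\<^sub>m k) $$ (i,i) = T $$ (i,i) ^ k)"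
proof (induction k)
  case 0
  then show ?case using T by auto
next
  case (Suc k)
  have Tk: "T ^\<^sub>m k \<in> carrier_mat n n" using T by simp
  have low: "(T ^\<^sub>m k) $$ (i,l) = 0" if "l < i" "i < n" for i l
    using Suc.IH that Tk by auto
  have lowT: "T $$ (i,l) = 0" if "l < i" "i < n" for i l
    using ut that T by auto
  have "upper_triangular (T ^\<^sub>m Suc k)"
  proof (rule upper_triangularI)
    fix i j assume ji: "j < i" and i: "i < dim_row (T ^\<^sub>m Suc k)"
    hence i: "i < n" using T by simp
    have "(T ^\<^sub>m Suc k) $$ (i,j) = (\<Sum>l<n. (T ^\<^sub>m k) $$ (i,l) * T $$ (l,j))"
      using mult_entry[OF Tk T i] ji i by simp
    also have "\<dots> = 0"
    proof (intro sum.neutral ballI)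
      fix l assume l: "l \<in> {..<n}"
      show "(T ^\<^sub>m k) $$ (i,l) * T $$ (l,j) = 0"
        using low[of l i] lowT[of j l] i l ji by (cases "l < i") auto
    qed
    finally show "(T ^\<^sub>m Suc k) $$ (i,j) = 0" .
  qed
  moreover have "(T ^\<^sub>m Suc k) $$ (i,i) = T $$ (i,i) ^ Suc k" if i: "i < n" for i
  proof -
    have "(T ^\<^sub>m Suc k) $$ (i,i) = (\<Sum>l<n. (T ^\<^sub>m k) $$ (i,l) * T $$ (l,i))"
      using mult_entry[OF Tk T i i] by simp
    also have "\<dots> = (\<Sum>l<n. if l = i then (T ^\<^sub>m k) $$ (i,l) * T $$ (l,i) else 0)"
    proof (intro sum.cong refl)
      fix l assume l: "l \<in> {..<n}"
      show "(T ^\<^sub>m k) $$ (i,l) * T $$ (l,i) = (if l = i then (T ^\<^sub>m k) $$ (i,l) * T $$ (l,i) else 0)"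
        using low[of l i] lowT[of i l] i l by (cases "l < i"; cases "l = i") auto
    qed
    also have "\<dots> = (T ^\<^sub>m k) $$ (i,i) * T $$ (i,i)" using i by simp
    finally show ?thesis using Suc.IH i by (simp del: power_Suc add: power_Suc2)
  qed
  ultimately show ?case by blast
qed

lemma trace_pow_bound:
  assumes M: "(M :: complex mat) \<in> carrier_mat n n" and sr: "spectral_radius M < 1"
  shows "cmod (mtr n (M ^\<^sub>m k)) \<le> n"
proof -
  obtain as where cA: "char_poly M = (\<Prod>a\<leftarrow>as. [:- a, 1:])"
    using char_poly_factorized[OF M] by auto
  obtain T where T: "T \<in> carrier_mat n n" "upper_triangular T" "similar_mat M T"
    using schur_decomposition_exists[OF M cA] by blast
  obtain n' P Q where PQ: "{M,T,P,Q} \<subseteq> carrier_mat n' n'" "P * Q = 1\<^sub>m n'" "Q * P = 1\<^sub>m n'" "M = P * T * Q"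
    using similar_matD[OF T(3)] by blast
  have n': "n' = n" using PQ(1) M by auto
  have Pc: "P \<in> carrier_mat n n" and Qc: "Q \<in> carrier_mat n n" using PQ(1) n' by auto
  have "M ^\<^sub>m k = P * T ^\<^sub>m k * Q"
    using conj_pow[OF T(1) Qc Pc, of k] PQ n' by simp
  hence "mtr n (M ^\<^sub>m k) = mtr n (P * (T ^\<^sub>m k * Q))"
    using Pc Qc T(1) by (simp add: assoc_mult_mat[of _ n n _ n _ n])
  also have "\<dots> = mtr n ((T ^\<^sub>m k * Q) * P)" using Pc Qc T(1) by (intro mtr_comm) auto
  also have "(T ^\<^sub>m k * Q) * P = T ^\<^sub>m k"
    using Pc Qc T(1) PQ n' by (simp add: assoc_mult_mat[of _ n n _ n _ n])
  finally have tr: "mtr n (M ^\<^sub>m k) = (\<Sum>i<n. T $$ (i,i) ^ k)"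
    unfolding mtr_def using ut_pow[OF T(1,2), of k] by simp
  have ev: "cmod (T $$ (i,i)) \<le> 1" if i: "i < n" for i
  proof -
    have "T $$ (i,i) \<in> set (diag_mat T)" using i T(1) unfolding diag_mat_def by auto
    hence "poly (char_poly T) (T $$ (i,i)) = 0"
      unfolding char_poly_upper_triangular[OF T(1,2)] by (rule linear_poly_root)
    hence "poly (char_poly M) (T $$ (i,i)) = 0" using char_poly_similar[OF T(3)] by simp
    hence e: "eigenvalue M (T $$ (i,i))" using eigenvalue_root_char_poly[OF M] by simp
    hence "cmod (T $$ (i,i)) \<in> norm ` spectrum M" unfolding spectrum_def by auto
    from spectral_radius_mem_max(2)[OF M eigenvalue_imp_nonzero_dim[OF M e] this]
    show ?thesis using sr by simp
  qed
  have "cmod (\<Sum>i<n. T $$ (i,i) ^ k) \<le> (\<Sum>i<n. cmod (T $$ (i,i)) ^ k)"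
    by (rule order.trans[OF norm_sum]) (simp add: norm_power)
  also have "\<dots> \<le> (\<Sum>i<(n::nat). 1)"
    by (intro sum_mono) (simp add: ev power_le_one)
  finally show ?thesis using tr by simp
qed

definition mhd :: "nat \<Rightarrow> (complex \<Rightarrow> complex mat) \<Rightarrow> complex mat \<Rightarrow> complex \<Rightarrow> bool" where
  "mhd n F D z \<longleftrightarrow> (\<forall>i<n. \<forall>j<n. ((\<lambda>w. F w $$ (i,j)) has_field_derivative D $$ (i,j)) (at z))"

lemma mhd_mult:
  assumes F: "\<And>w. F w \<in> carrier_mat n n" and G: "\<And>w. G w \<in> carrier_mat n n"
    and D: "D \<in> carrier_mat n n" and E: "E \<in> carrier_mat n n"
    and dF: "mhd n F D z" and dG: "mhd n G E z"
  shows "mhd n (\<lambda>w. F w * G w) (D * G z + F z * E) z"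
  unfolding mhd_def
proof (intro allI impI)
  fix i j assume i: "i < n" and j: "j < n"
  have eq: "(\<lambda>w. (F w * G w) $$ (i,j)) = (\<lambda>w. \<Sum>l<n. F w $$ (i,l) * G w $$ (l,j))"
    using mult_entry[OF F G i j] by auto
  have "((\<lambda>w. \<Sum>l<n. F w $$ (i,l) * G w $$ (l,j)) has_field_derivative
        (\<Sum>l<n. F z $$ (i,l) * E $$ (l,j) + D $$ (i,l) * G z $$ (l,j))) (at z)"
    using dF dG i j unfolding mhd_def by (intro DERIV_sum DERIV_mult') auto
  moreover have "(\<Sum>l<n. F z $$ (i,l) * E $$ (l,j) + D $$ (i,l) * G z $$ (l,j)) = (D * G z + F z * E) $$ (i,j)"
    using mult_entry[OF D G[of z] i j] mult_entry[OF F[of z] E i j] D G[of z] F[of z] E i j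
    by (simp add: sum.distrib add.commute)
  ultimately show "((\<lambda>w. (F w * G w) $$ (i,j)) has_field_derivative (D * G z + F z * E) $$ (i,j)) (at z)"
    unfolding eq by simp
qed

fun dpow :: "nat \<Rightarrow> complex mat \<Rightarrow> complex mat \<Rightarrow> nat \<Rightarrow> complex mat" where
  "dpow n A D 0 = 0\<^sub>m n n"
| "dpow n A D (Suc k) = dpow n A D k * A + A ^\<^sub>m k * D"

lemma dpow_carrier: "A \<in> carrier_mat n n \<Longrightarrow> D \<in> carrier_mat n n \<Longrightarrow> dpow n A D k \<in> carrier_mat n n"
  by (induction k) auto

lemma mhd_pow:
  assumes F: "\<And>w. F w \<in> carrier_mat n n" and D: "D \<in> carrier_mat n n" and dF: "mhd n F D z"
  shows "mhd n (\<lambda>w. F w ^\<^sub>m k) (dpow n (F z) D k) z"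
proof (induction k)
  case 0
  have dr: "dim_row (F w) = n" for w using F[of w] by (simp add: carrier_matD)
  have "(\<lambda>w. (F w ^\<^sub>m 0) $$ (i,j)) = (\<lambda>w. (1\<^sub>m n :: complex mat) $$ (i,j))" for i j
    using dr by simp
  then show ?case unfolding mhd_def by simp
next
  case (Suc k)
  have "mhd n (\<lambda>w. F w ^\<^sub>m k * F w) (dpow n (F z) D k * F z + F z ^\<^sub>m k * D) z"
    by (rule mhd_mult[OF _ F dpow_carrier[OF F D] D Suc.IH dF]) (use F in simp)
  then show ?case by simp
qed

lemma mtr_deriv:
  assumes "mhd n F D z"
  shows "((\<lambda>w. mtr n (F w)) has_field_derivative mtr n D) (at z)"
  unfolding mtr_def using assms unfolding mhd_def by (intro DERIV_sum) auto

lemma mtr_add: "X \<in> carrier_mat n n \<Longrightarrow> Y \<in> carrier_mat n n \<Longrightarrow> mtr n (X + Y) = mtr n X + mtr n Y"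
  unfolding mtr_def by (simp add: sum.distrib)

lemma mtr_zero[simp]: "mtr n (0\<^sub>m n n) = 0"
  unfolding mtr_def by simp

lemma comm_pow:
  assumes A: "A \<in> carrier_mat n n" and M: "M \<in> carrier_mat n n" and c: "M * A = A * M"
  shows "M * A ^\<^sub>m k = A ^\<^sub>m k * M"
proof (induction k)
  case 0 then show ?case using A M by simp
next
  case (Suc k)
  have "M * A ^\<^sub>m Suc k = (M * A ^\<^sub>m k) * A" using A M by (simp add: assoc_mult_mat[of _ n n _ n _ n])
  also have "\<dots> = A ^\<^sub>m k * (M * A)" using Suc A M by (simp add: assoc_mult_mat[of _ n n _ n _ n])
  also have "\<dots> = A ^\<^sub>m Suc k * M" using c A M by (simp add: assoc_mult_mat[of _ n n _ n _ n])
  finally show ?case .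
qed

lemma dpow_trace:
  assumes A: "A \<in> carrier_mat n n" and D: "D \<in> carrier_mat n n"
  shows "M \<in> carrier_mat n n \<Longrightarrow> M * A = A * M \<Longrightarrow>
     mtr n (dpow n A D k * M) = of_nat k * mtr n (D * A ^\<^sub>m (k - 1) * M)"
proof (induction k arbitrary: M)
  case 0
  then show ?case using A by (simp add: left_mult_zero_mat[of M n n])
next
  case (Suc k)
  note M = Suc.prems(1) and c = Suc.prems(2)
  have dk: "dpow n A D k \<in> carrier_mat n n" by (rule dpow_carrier[OF A D])
  have AMc: "A * M \<in> carrier_mat n n" using A M by simp
  have cAM: "(A * M) * A = A * (A * M)"
    using A M c by (simp add: assoc_mult_mat[of _ n n _ n _ n])
  have "dpow n A D (Suc k) * M = dpow n A D k * (A * M) + A ^\<^sub>m k * D * M"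
    using dk A D M by (simp add: add_mult_distrib_mat[of _ n n _ _ n] assoc_mult_mat[of _ n n _ n _ n] cm)
  hence "mtr n (dpow n A D (Suc k) * M) = mtr n (dpow n A D k * (A * M)) + mtr n (A ^\<^sub>m k * D * M)"
    using dk A D M by (simp add: mtr_add cm)
  also have "mtr n (dpow n A D k * (A * M)) = of_nat k * mtr n (D * A ^\<^sub>m k * M)"
  proof (cases k)
    case 0 then show ?thesis using Suc.IH[OF AMc cAM] by simp
  next
    case (Suc k')
    have e: "A ^\<^sub>m k' * (A * M) = A ^\<^sub>m k * M"
      using A M Suc by (simp add: assoc_mult_mat[of "A ^\<^sub>m k'" n n A n M n, symmetric])
    have "D * A ^\<^sub>m (k - 1) * (A * M) = D * (A ^\<^sub>m k' * (A * M))"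
      using A D M Suc by (simp add: assoc_mult_mat[of _ n n _ n _ n])
    also have "\<dots> = D * A ^\<^sub>m k * M" unfolding e using A D M by (simp add: assoc_mult_mat[of _ n n _ n _ n])
    finally have "D * A ^\<^sub>m (k - 1) * (A * M) = D * A ^\<^sub>m k * M" .
    then show ?thesis using Suc.IH[OF AMc cAM] by simp
  qed
  also have "mtr n (A ^\<^sub>m k * D * M) = mtr n (D * A ^\<^sub>m k * M)"
  proof -
    have "mtr n (A ^\<^sub>m k * D * M) = mtr n (A ^\<^sub>m k * (D * M))"
      using A D M by (simp add: assoc_mult_mat[of _ n n _ n _ n])
    also have "\<dots> = mtr n ((D * M) * A ^\<^sub>m k)" using A D M by (intro mtr_comm) auto
    also have "(D * M) * A ^\<^sub>m k = D * (A ^\<^sub>m k * M)"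
      using A D M comm_pow[OF A M c, of k] by (simp add: assoc_mult_mat[of _ n n _ n _ n])
    also have "\<dots> = D * A ^\<^sub>m k * M" using A D M by (simp add: assoc_mult_mat[of _ n n _ n _ n])
    finally show ?thesis .
  qed
  finally show ?case by (simp add: algebra_simps)
qed


lemma mtr_smult: "M \<in> carrier_mat n n \<Longrightarrow> mtr n (c \<cdot>\<^sub>m M) = c * mtr n M"
  unfolding mtr_def by (simp add: sum_distrib_left)

lemma kob_bound:
  assumes A: "A \<in> Omega n" and phi: "mat_holomorphic_on n \<phi> (ball 0 1)"
    and img: "\<phi> ` ball 0 1 \<subseteq> Omega n" and phi0: "\<phi> 0 = A"
  shows "cmod (of_nat (Suc s) * mtr n (A ^\<^sub>m s * mat_deriv n \<phi> 0)) \<le> 2 * n"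
proof -
  have Ac: "A \<in> carrier_mat n n" using A unfolding Omega_def by auto
  define \<psi> where "\<psi> = (\<lambda>w. mat n n (\<lambda>(i,j). \<phi> w $$ (i,j)))"
  have psic: "\<psi> w \<in> carrier_mat n n" for w unfolding \<psi>_def by simp
  have phic: "\<phi> w \<in> carrier_mat n n" if "w \<in> ball 0 1" for w
    using img that unfolding Omega_def by blast
  have psiphi: "\<psi> w = \<phi> w" if "w \<in> ball 0 1" for w
    using phic[OF that] unfolding \<psi>_def by (intro eq_matI) auto
  define D where "D = (\<lambda>z. mat_deriv n \<phi> z)"
  have Dc: "D z \<in> carrier_mat n n" for z unfolding D_def mat_deriv_def by simp
  have mhd: "mhd n \<psi> (D z) z" if z: "z \<in> ball 0 1" for z
    unfolding mhd_def
  proof (intro allI impI)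
    fix i j assume i: "i < n" and j: "j < n"
    have "(\<lambda>w. \<psi> w $$ (i,j)) = (\<lambda>w. \<phi> w $$ (i,j))" unfolding \<psi>_def using i j by auto
    moreover have "((\<lambda>w. \<phi> w $$ (i,j)) has_field_derivative deriv (\<lambda>w. \<phi> w $$ (i,j)) z) (at z)"
      using phi i j z unfolding mat_holomorphic_on_def by (intro holomorphic_derivI) auto
    ultimately show "((\<lambda>w. \<psi> w $$ (i,j)) has_field_derivative D z $$ (i,j)) (at z)"
      unfolding D_def mat_deriv_def using i j by simp
  qed
  define g where "g = (\<lambda>w. mtr n (\<psi> w ^\<^sub>m Suc s))"
  have gd: "(g has_field_derivative mtr n (dpow n (\<psi> z) (D z) (Suc s))) (at z)" if z: "z \<in> ball 0 1" for z
    unfolding g_def by (rule mtr_deriv, rule mhd_pow[OF psic Dc mhd[OF z]])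
  have hol: "g holomorphic_on ball 0 1"
  proof -
    have "\<forall>z\<in>ball 0 1. \<exists>f'. (g has_field_derivative f') (at z)" using gd by blast
    thus ?thesis using holomorphic_on_open[of "ball 0 1" g] by simp
  qed
  have "norm ((deriv ^^ 1) g 0) \<le> (fact 1 :: real) * real n / (1/2) ^ 1"
  proof (rule Cauchy_inequality)
    show "g holomorphic_on ball 0 (1/2)" by (rule holomorphic_on_subset[OF hol]) auto
    show "continuous_on (cball 0 (1/2)) g"
      by (rule continuous_on_subset[OF holomorphic_on_imp_continuous_on[OF hol]]) auto
    fix x :: complex assume "norm (0 - x) = 1/2"
    hence x: "x \<in> ball 0 1" by auto
    have "g x = mtr n (\<phi> x ^\<^sub>m Suc s)" unfolding g_def using psiphi[OF x] by simp
    moreover have "\<phi> x \<in> Omega n" using img x by auto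
    ultimately show "norm (g x) \<le> n" using trace_pow_bound[of "\<phi> x" n "Suc s"] unfolding Omega_def by auto
  qed simp
  hence "cmod (deriv g 0) \<le> 2 * n" by simp
  moreover have "deriv g 0 = mtr n (dpow n A (D 0) (Suc s))"
    using DERIV_imp_deriv[OF gd[of 0]] psiphi[of 0] phi0 by simp
  moreover have "mtr n (dpow n A (D 0) (Suc s)) = of_nat (Suc s) * mtr n (A ^\<^sub>m s * D 0)"
  proof -
    have "mtr n (dpow n A (D 0) (Suc s)) = mtr n (dpow n A (D 0) (Suc s) * 1\<^sub>m n)"
      by (simp only: right_mult_one_mat[OF dpow_carrier[OF Ac Dc]])
    also have "\<dots> = of_nat (Suc s) * mtr n (D 0 * A ^\<^sub>m s * 1\<^sub>m n)"
      using dpow_trace[OF Ac Dc[of 0], of "1\<^sub>m n" "Suc s"] Ac by (simp del: dpow.simps)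
    also have "mtr n (D 0 * A ^\<^sub>m s * 1\<^sub>m n) = mtr n (A ^\<^sub>m s * D 0)"
      using Ac Dc mtr_comm[of "D 0" n "A ^\<^sub>m s"] by simp
    finally show ?thesis .
  qed
  ultimately show ?thesis unfolding D_def by simp
qed

lemma kob_trace:
  assumes A: "A \<in> Omega n" and B: "B \<in> carrier_mat n n"
    and kob: "kobayashi n (Omega n) A B = 0"
  shows "mtr n (A ^\<^sub>m s * B) = 0"
proof (rule ccontr)
  assume ne: "mtr n (A ^\<^sub>m s * B) \<noteq> 0"
  have Ac: "A \<in> carrier_mat n n" using A unfolding Omega_def by auto
  define t where "t = cmod (mtr n (A ^\<^sub>m s * B))"
  have t0: "t > 0" unfolding t_def using ne by simp
  define e where "e = t / (2 * n + 1)"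
  have e0: "e > 0" unfolding e_def using t0 by simp
  let ?S = "{\<alpha>. \<exists>\<phi>. mat_holomorphic_on n \<phi> (ball 0 1) \<and> \<phi> ` ball 0 1 \<subseteq> Omega n \<and>
       \<phi> 0 = A \<and> \<alpha> \<cdot>\<^sub>m mat_deriv n \<phi> 0 = B}"
  have "(INF \<alpha>\<in>?S. ereal (cmod \<alpha>)) < ereal e"
    using kob e0 unfolding kobayashi_def by simp
  then obtain \<alpha> where "\<alpha> \<in> ?S" and ae: "cmod \<alpha> < e" unfolding INF_less_iff by auto
  then obtain \<phi> where phi: "mat_holomorphic_on n \<phi> (ball 0 1)" "\<phi> ` ball 0 1 \<subseteq> Omega n"
    "\<phi> 0 = A" and Bd: "\<alpha> \<cdot>\<^sub>m mat_deriv n \<phi> 0 = B" by blast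
  have Dc: "mat_deriv n \<phi> 0 \<in> carrier_mat n n" unfolding mat_deriv_def by simp
  have "mtr n (A ^\<^sub>m s * B) = \<alpha> * mtr n (A ^\<^sub>m s * mat_deriv n \<phi> 0)"
    unfolding Bd[symmetric] using Ac Dc mtr_smult[of "A ^\<^sub>m s * mat_deriv n \<phi> 0" n \<alpha>]
    by (simp add: mult_smult_distrib[of _ n n] cm)
  hence "cmod (of_nat (Suc s) * mtr n (A ^\<^sub>m s * B)) = cmod \<alpha> * cmod (of_nat (Suc s) * mtr n (A ^\<^sub>m s * mat_deriv n \<phi> 0))"
    by (simp add: norm_mult)
  also have "\<dots> \<le> cmod \<alpha> * (2 * n)"
    by (rule mult_left_mono[OF kob_bound[OF A phi]]) simp
  also have "\<dots> \<le> e * (2 * n)" using ae by (intro mult_right_mono) auto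
  also have "\<dots> < t"
    unfolding e_def using t0 by (simp add: field_simps)
  finally have lt: "cmod (of_nat (Suc s) * mtr n (A ^\<^sub>m s * B)) < t" .
  have "cmod (of_nat (Suc s) * mtr n (A ^\<^sub>m s * B)) = real (Suc s) * t"
    unfolding t_def by (simp only: norm_mult norm_of_nat)
  with lt have "real (Suc s) * t < 1 * t" by simp
  hence "real (Suc s) < 1" using t0 mult_less_cancel_right[of "real (Suc s)" t 1] by simp
  thus False by simp
qed

lemma hol_mult:
  assumes F: "\<And>w. F w \<in> carrier_mat n n" and G: "\<And>w. G w \<in> carrier_mat n n"
    and hF: "mat_holomorphic_on n F UNIV" and hG: "mat_holomorphic_on n G UNIV"
  shows "mat_holomorphic_on n (\<lambda>w. F w * G w) UNIV"
  unfolding mat_holomorphic_on_def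
proof (intro allI impI)
  fix i j assume i: "i < n" and j: "j < n"
  have eq: "(\<lambda>w. (F w * G w) $$ (i,j)) = (\<lambda>w. \<Sum>l<n. F w $$ (i,l) * G w $$ (l,j))"
    using mult_entry[OF F G i j] by auto
  show "(\<lambda>w. (F w * G w) $$ (i,j)) holomorphic_on UNIV"
    unfolding eq using hF hG i j unfolding mat_holomorphic_on_def
    by (intro holomorphic_on_sum holomorphic_on_mult) auto
qed

lemma hol_det:
  assumes F: "\<And>w. F w \<in> carrier_mat m m"
    and hF: "\<And>i j. i < m \<Longrightarrow> j < m \<Longrightarrow> (\<lambda>w. F w $$ (i,j)) holomorphic_on UNIV"
  shows "(\<lambda>w. det (F w)) holomorphic_on UNIV"
proof -
  have eq: "(\<lambda>w. det (F w)) = (\<lambda>w. \<Sum> p \<in> {p. p permutes {0 ..< m}}. signof p * (\<Prod> i = 0 ..< m. F w $$ (i, p i)))"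
    using det_def'[OF F] by auto
  show ?thesis unfolding eq
  proof (intro holomorphic_on_sum holomorphic_on_mult holomorphic_on_prod holomorphic_on_const)
    fix p i assume p: "p \<in> {p. p permutes {0 ..< m}}" and i: "i \<in> {0..<m}"
    have "p i < m" using p i permutes_in_image[of p "{0..<m}" i] by auto
    thus "(\<lambda>w. F w $$ (i, p i)) holomorphic_on UNIV" using hF i by auto
  qed
qed

lemma hol_adj:
  assumes F: "\<And>w. F w \<in> carrier_mat n n" and hF: "mat_holomorphic_on n F UNIV"
  shows "mat_holomorphic_on n (\<lambda>w. adj_mat (F w)) UNIV"
  unfolding mat_holomorphic_on_def
proof (intro allI impI)
  fix i j assume i: "i < n" and j: "j < n"
  have eq: "(\<lambda>w. adj_mat (F w) $$ (i,j)) = (\<lambda>w. (-1)^(j+i) * det (mat_delete (F w) j i))"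
  proof
    fix w have "dim_row (F w) = n" "dim_col (F w) = n" using F[of w] by auto
    thus "adj_mat (F w) $$ (i,j) = (-1)^(j+i) * det (mat_delete (F w) j i)"
      using i j by (simp add: adj_mat_def cofactor_def)
  qed
  have "(\<lambda>w. det (mat_delete (F w) j i)) holomorphic_on UNIV"
  proof (rule hol_det)
    show "mat_delete (F w) j i \<in> carrier_mat (n-1) (n-1)" for w using mat_delete_carrier[OF F] .
    fix a b assume a: "a < n - 1" and b: "b < n - 1"
    have eq2: "(\<lambda>w. mat_delete (F w) j i $$ (a,b)) =
      (\<lambda>w. F w $$ (if a < j then a else Suc a, if b < i then b else Suc b))"
    proof
      fix w have "dim_row (F w) = n" "dim_col (F w) = n" using F[of w] by auto
      thus "mat_delete (F w) j i $$ (a,b) = F w $$ (if a < j then a else Suc a, if b < i then b else Suc b)"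
        using a b by (simp add: mat_delete_def)
    qed
    show "(\<lambda>w. mat_delete (F w) j i $$ (a,b)) holomorphic_on UNIV"
      unfolding eq2 using hF a b unfolding mat_holomorphic_on_def by auto
  qed
  thus "(\<lambda>w. adj_mat (F w) $$ (i,j)) holomorphic_on UNIV"
    unfolding eq by (intro holomorphic_on_mult holomorphic_on_const)
qed


definition Lm :: "nat \<Rightarrow> complex mat \<Rightarrow> complex mat" where
  "Lm n X = mat n n (\<lambda>(i,j). if j < i then X $$ (i,j) else 0)"
definition Um :: "nat \<Rightarrow> complex mat \<Rightarrow> complex mat" where
  "Um n X = mat n n (\<lambda>(i,j). if i < j then X $$ (i,j) else 0)"
definition Ed :: "nat \<Rightarrow> complex mat \<Rightarrow> complex mat" where
  "Ed n X = mat n n (\<lambda>(i,j). if i = j then X $$ (i,i) else 0)"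
definition Em :: "nat \<Rightarrow> complex mat \<Rightarrow> complex \<Rightarrow> complex mat" where
  "Em n X w = mat n n (\<lambda>(i,j). if i = j then exp (w * X $$ (i,i)) else 0)"
definition Sm :: "nat \<Rightarrow> complex mat \<Rightarrow> complex \<Rightarrow> complex mat" where
  "Sm n X w = (1\<^sub>m n + w \<cdot>\<^sub>m Lm n X) * Em n X w * (1\<^sub>m n + w \<cdot>\<^sub>m Um n X)"

lemma carriers[simp]:
  "Lm n X \<in> carrier_mat n n" "Um n X \<in> carrier_mat n n" "Ed n X \<in> carrier_mat n n"
  "Em n X w \<in> carrier_mat n n" "Sm n X w \<in> carrier_mat n n"
  unfolding Lm_def Um_def Ed_def Em_def Sm_def by auto

lemma dims[simp]:
  "dim_row (Lm n X) = n" "dim_col (Lm n X) = n" "dim_row (Um n X) = n" "dim_col (Um n X) = n"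
  "dim_row (Ed n X) = n" "dim_col (Ed n X) = n" "dim_row (Em n X w) = n" "dim_col (Em n X w) = n"
  unfolding Lm_def Um_def Ed_def Em_def by auto

lemma S_det: "det (Sm n X w) \<noteq> 0"
proof -
  have c: "1\<^sub>m n + w \<cdot>\<^sub>m Lm n X \<in> carrier_mat n n" "1\<^sub>m n + w \<cdot>\<^sub>m Um n X \<in> carrier_mat n n" by auto
  have d1: "det (1\<^sub>m n + w \<cdot>\<^sub>m Lm n X) = 1"
  proof -
    have "det (1\<^sub>m n + w \<cdot>\<^sub>m Lm n X) = prod_list (diag_mat (1\<^sub>m n + w \<cdot>\<^sub>m Lm n X))"
      by (rule det_lower_triangular[OF _ c(1)]) (auto simp: Lm_def)
    also have "\<dots> = 1" unfolding prod_list_diag_prod by (intro prod.neutral) (auto simp: Lm_def)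
    finally show ?thesis .
  qed
  have d2: "det (1\<^sub>m n + w \<cdot>\<^sub>m Um n X) = 1"
  proof -
    have "det (1\<^sub>m n + w \<cdot>\<^sub>m Um n X) = prod_list (diag_mat (1\<^sub>m n + w \<cdot>\<^sub>m Um n X))"
      by (rule det_upper_triangular[OF _ c(2)]) (auto simp: Um_def)
    also have "\<dots> = 1" unfolding prod_list_diag_prod by (intro prod.neutral) (auto simp: Um_def)
    finally show ?thesis .
  qed
  have d3: "det (Em n X w) \<noteq> 0"
  proof -
    have "det (Em n X w) = prod_list (diag_mat (Em n X w))"
      by (rule det_upper_triangular) (auto simp: Em_def)
    also have "\<dots> \<noteq> 0" unfolding prod_list_diag_prod by (auto simp: Em_def)
    finally show ?thesis .
  qed
  have "det (Sm n X w) = det ((1\<^sub>m n + w \<cdot>\<^sub>m Lm n X) * Em n X w) * det (1\<^sub>m n + w \<cdot>\<^sub>m Um n X)"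
    unfolding Sm_def by (rule det_mult[of _ n]) (use c in \<open>simp_all add: cm\<close>)
  also have "det ((1\<^sub>m n + w \<cdot>\<^sub>m Lm n X) * Em n X w) = det (1\<^sub>m n + w \<cdot>\<^sub>m Lm n X) * det (Em n X w)"
    by (rule det_mult[of _ n]) (use c in simp_all)
  finally show ?thesis using d1 d2 d3 by simp
qed

lemma S_0: "Sm n X 0 = 1\<^sub>m n"
proof -
  have "Em n X 0 = 1\<^sub>m n" unfolding Em_def by (intro eq_matI) auto
  moreover have "1\<^sub>m n + 0 \<cdot>\<^sub>m Lm n X = 1\<^sub>m n" "1\<^sub>m n + 0 \<cdot>\<^sub>m Um n X = (1\<^sub>m n :: complex mat)"
    by (intro eq_matI; auto simp: Lm_def Um_def)+
  ultimately show ?thesis unfolding Sm_def by simp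
qed

lemma S_hol: "mat_holomorphic_on n (Sm n X) UNIV"
proof -
  have hL: "mat_holomorphic_on n (\<lambda>w. 1\<^sub>m n + w \<cdot>\<^sub>m Lm n X) UNIV"
    unfolding mat_holomorphic_on_def by (auto simp: Lm_def intro!: holomorphic_intros)
  have hU: "mat_holomorphic_on n (\<lambda>w. 1\<^sub>m n + w \<cdot>\<^sub>m Um n X) UNIV"
    unfolding mat_holomorphic_on_def by (auto simp: Um_def intro!: holomorphic_intros)
  have hE: "mat_holomorphic_on n (Em n X) UNIV"
    unfolding mat_holomorphic_on_def
  proof (intro allI impI)
    fix i j assume "i < n" "j < n"
    thus "(\<lambda>w. Em n X w $$ (i,j)) holomorphic_on UNIV"
      by (cases "i = j") (auto simp: Em_def intro!: holomorphic_intros)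
  qed
  have "mat_holomorphic_on n (\<lambda>w. (1\<^sub>m n + w \<cdot>\<^sub>m Lm n X) * Em n X w * (1\<^sub>m n + w \<cdot>\<^sub>m Um n X)) UNIV"
    by (intro hol_mult hL hU hE) (auto simp: cm)
  thus ?thesis unfolding Sm_def[abs_def] .
qed

lemma S_mhd:
  assumes Xc: "X \<in> carrier_mat n n"
  shows "mhd n (Sm n X) X 0"
proof -
  have dL: "mhd n (\<lambda>w. 1\<^sub>m n + w \<cdot>\<^sub>m Lm n X) (Lm n X) 0"
    unfolding mhd_def by (auto simp: Lm_def intro!: derivative_eq_intros)
  have dU: "mhd n (\<lambda>w. 1\<^sub>m n + w \<cdot>\<^sub>m Um n X) (Um n X) 0"
    unfolding mhd_def by (auto simp: Um_def intro!: derivative_eq_intros)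
  have dE: "mhd n (Em n X) (Ed n X) 0"
    unfolding mhd_def by (auto simp: Em_def Ed_def intro!: derivative_eq_intros)
  have E0: "Em n X 0 = 1\<^sub>m n" unfolding Em_def by (intro eq_matI) auto
  have L0: "1\<^sub>m n + 0 \<cdot>\<^sub>m Lm n X = 1\<^sub>m n" "1\<^sub>m n + 0 \<cdot>\<^sub>m Um n X = (1\<^sub>m n :: complex mat)"
    by (intro eq_matI; auto simp: Lm_def Um_def)+
  have d1: "mhd n (\<lambda>w. (1\<^sub>m n + w \<cdot>\<^sub>m Lm n X) * Em n X w) (Lm n X * Em n X 0 + (1\<^sub>m n + 0 \<cdot>\<^sub>m Lm n X) * Ed n X) 0"
    by (rule mhd_mult[OF _ _ _ _ dL dE]) auto
  have d2: "mhd n (\<lambda>w. (1\<^sub>m n + w \<cdot>\<^sub>m Lm n X) * Em n X w * (1\<^sub>m n + w \<cdot>\<^sub>m Um n X))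
     ((Lm n X * Em n X 0 + (1\<^sub>m n + 0 \<cdot>\<^sub>m Lm n X) * Ed n X) * (1\<^sub>m n + 0 \<cdot>\<^sub>m Um n X) +
      ((1\<^sub>m n + 0 \<cdot>\<^sub>m Lm n X) * Em n X 0) * Um n X) 0"
    by (rule mhd_mult[OF _ _ _ _ d1 dU]) (simp_all add: cm)
  have "(Lm n X * Em n X 0 + (1\<^sub>m n + 0 \<cdot>\<^sub>m Lm n X) * Ed n X) * (1\<^sub>m n + 0 \<cdot>\<^sub>m Um n X) +
      ((1\<^sub>m n + 0 \<cdot>\<^sub>m Lm n X) * Em n X 0) * Um n X = Lm n X + Ed n X + Um n X"
    unfolding E0 L0 by simp
  also have "\<dots> = X" using Xc by (intro eq_matI) (auto simp: Lm_def Um_def Ed_def)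
  finally show ?thesis using d2 unfolding Sm_def[abs_def] by simp
qed


lemma construct:
  assumes A: "A \<in> Omega n" and Xc: "X \<in> carrier_mat n n"
  shows "\<exists>\<phi>. mat_holomorphic_on n \<phi> UNIV \<and> (\<forall>w. \<phi> w \<in> Omega n) \<and>
           \<phi> 0 = A \<and> mat_deriv n \<phi> 0 = X * A - A * X \<and> (\<forall>w. spectrum (\<phi> w) = spectrum A)"
proof -
  have Ac: "A \<in> carrier_mat n n" using A unfolding Omega_def by auto
  define S where "S = Sm n X"
  define T where "T = (\<lambda>w. (1 / det (S w)) \<cdot>\<^sub>m adj_mat (S w))"
  define \<phi> where "\<phi> = (\<lambda>w. S w * A * T w)"
  have Sc: "S w \<in> carrier_mat n n" for w unfolding S_def by simp
  have Tc: "T w \<in> carrier_mat n n" for w unfolding T_def using adj_mat(1)[OF Sc] by simp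
  have phic: "\<phi> w \<in> carrier_mat n n" for w unfolding \<phi>_def using Sc[of w] Tc[of w] Ac by (simp add: cm)
  have ST: "S w * T w = 1\<^sub>m n" "T w * S w = 1\<^sub>m n" for w
  proof -
    have d: "det (S w) \<noteq> 0" unfolding S_def by (rule S_det)
    have "S w * T w = (1 / det (S w)) \<cdot>\<^sub>m (S w * adj_mat (S w))"
      unfolding T_def using mult_smult_distrib[OF Sc adj_mat(1)[OF Sc]] .
    also have "\<dots> = 1\<^sub>m n" unfolding adj_mat(2)[OF Sc] using d by (intro eq_matI) auto
    finally show "S w * T w = 1\<^sub>m n" .
    have "T w * S w = (1 / det (S w)) \<cdot>\<^sub>m (adj_mat (S w) * S w)"
      unfolding T_def using mult_smult_assoc_mat[OF adj_mat(1)[OF Sc] Sc] .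
    also have "\<dots> = 1\<^sub>m n" unfolding adj_mat(3)[OF Sc] using d by (intro eq_matI) auto
    finally show "T w * S w = 1\<^sub>m n" .
  qed
  have sim: "similar_mat (\<phi> w) A" for w
    by (rule similar_matI[of "\<phi> w" A "S w" "T w" n]) (use phic Ac Sc Tc ST in \<open>auto simp: \<phi>_def\<close>)
  have spec: "spectrum (\<phi> w) = spectrum A" for w
  proof -
    have "spectrum (\<phi> w) = {k. poly (char_poly (\<phi> w)) k = 0}"
      unfolding spectrum_def using eigenvalue_root_char_poly[OF phic] by auto
    also have "\<dots> = {k. poly (char_poly A) k = 0}" using char_poly_similar[OF sim] by simp
    also have "\<dots> = spectrum A"
      unfolding spectrum_def using eigenvalue_root_char_poly[OF Ac] by auto
    finally show ?thesis .
  qed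
  have om: "\<phi> w \<in> Omega n" for w
    using A phic spec[of w] unfolding Omega_def spectral_radius_def by auto
  have S0: "S 0 = 1\<^sub>m n" unfolding S_def by (rule S_0)
  have T0: "T 0 = 1\<^sub>m n" using ST(1)[of 0] Tc[of 0] unfolding S0 by simp
  have phi0: "\<phi> 0 = A" unfolding \<phi>_def S0 T0 using Ac by simp
  have hS: "mat_holomorphic_on n S UNIV" unfolding S_def by (rule S_hol)
  have hA: "mat_holomorphic_on n (\<lambda>w. A) UNIV" unfolding mat_holomorphic_on_def by simp
  have hT: "mat_holomorphic_on n T UNIV"
    unfolding mat_holomorphic_on_def
  proof (intro allI impI)
    fix i j assume i: "i < n" and j: "j < n"
    have eq: "(\<lambda>w. T w $$ (i,j)) = (\<lambda>w. (1 / det (S w)) * adj_mat (S w) $$ (i,j))"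
    proof
      fix w have "dim_row (adj_mat (S w)) = n" "dim_col (adj_mat (S w)) = n"
        using adj_mat(1)[OF Sc[of w]] by auto
      thus "T w $$ (i,j) = (1 / det (S w)) * adj_mat (S w) $$ (i,j)" unfolding T_def using i j by simp
    qed
    have hd: "(\<lambda>w. det (S w)) holomorphic_on UNIV"
      by (rule hol_det[OF Sc]) (use hS in \<open>auto simp: mat_holomorphic_on_def\<close>)
    have ha: "(\<lambda>w. adj_mat (S w) $$ (i,j)) holomorphic_on UNIV"
      using hol_adj[OF Sc hS] i j unfolding mat_holomorphic_on_def by auto
    show "(\<lambda>w. T w $$ (i,j)) holomorphic_on UNIV"
      unfolding eq using S_det hd ha unfolding S_def
      by (intro holomorphic_on_mult holomorphic_on_divide holomorphic_on_const) auto
  qed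
  have hphi: "mat_holomorphic_on n \<phi> UNIV"
    unfolding \<phi>_def by (intro hol_mult hS hA hT) (use Sc Ac Tc in \<open>auto simp: cm\<close>)
  define D where "D = mat_deriv n \<phi> 0"
  have Dc: "D \<in> carrier_mat n n" unfolding D_def mat_deriv_def by simp
  have dphi: "mhd n \<phi> D 0"
    unfolding mhd_def D_def mat_deriv_def
    using hphi unfolding mat_holomorphic_on_def by (auto intro!: holomorphic_derivI)
  have dS: "mhd n S X 0" unfolding S_def by (rule S_mhd[OF Xc])
  have dA: "mhd n (\<lambda>w. A) (0\<^sub>m n n) 0" unfolding mhd_def by simp
  have d1: "mhd n (\<lambda>w. \<phi> w * S w) (D * S 0 + \<phi> 0 * X) 0"
    by (rule mhd_mult[OF phic Sc Dc Xc dphi dS])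
  have d2: "mhd n (\<lambda>w. S w * A) (X * A + S 0 * 0\<^sub>m n n) 0"
    by (rule mhd_mult[OF Sc _ Xc _ dS dA]) (use Ac in auto)
  have feq: "\<phi> w * S w = S w * A" for w
    unfolding \<phi>_def using Sc[of w] Tc[of w] Ac ST(2)[of w]
    by (simp add: assoc_mult_mat[of _ n n _ n _ n] cm)
  have "D = X * A - A * X"
  proof (rule eq_matI)
    fix i j assume "i < dim_row (X * A - A * X)" "j < dim_col (X * A - A * X)"
    hence i: "i < n" and j: "j < n" using Xc Ac by auto
    have e1: "((\<lambda>w. (\<phi> w * S w) $$ (i,j)) has_field_derivative (D * S 0 + \<phi> 0 * X) $$ (i,j)) (at 0)"
      using d1 i j unfolding mhd_def by auto
    have e2: "((\<lambda>w. (\<phi> w * S w) $$ (i,j)) has_field_derivative (X * A + S 0 * 0\<^sub>m n n) $$ (i,j)) (at 0)"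
      using d2 i j unfolding mhd_def feq by auto
    have "(D * S 0 + \<phi> 0 * X) $$ (i,j) = (X * A + S 0 * 0\<^sub>m n n) $$ (i,j)"
      using DERIV_unique[OF e1 e2] .
    moreover have "(D * S 0 + \<phi> 0 * X) $$ (i,j) = D $$ (i,j) + (A * X) $$ (i,j)"
      unfolding S0 phi0 using Dc Ac Xc i j by simp
    moreover have "(X * A + S 0 * 0\<^sub>m n n) $$ (i,j) = (X * A) $$ (i,j)"
      unfolding S0 using Ac Xc i j by simp
    ultimately show "D $$ (i,j) = (X * A - A * X) $$ (i,j)" using Ac Xc i j by (simp add: eq_diff_eq)
  qed (use Dc Ac Xc in auto)
  thus ?thesis using hphi om phi0 spec unfolding D_def by blast
qed

theorem proposition6:
  fixes n :: nat and A B :: "complex mat"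
  assumes "A \<in> Omega n" and "non_derogatory A" and "B \<in> carrier_mat n n"
    and "kobayashi n (Omega n) A B = 0"
  shows "\<exists>\<phi>. mat_holomorphic_on n \<phi> UNIV \<and> (\<forall>w. \<phi> w \<in> Omega n) \<and>
           \<phi> 0 = A \<and> mat_deriv n \<phi> 0 = B \<and> (\<forall>w. spectrum (\<phi> w) = spectrum A)"
proof -
  have Ac: "A \<in> carrier_mat n n" using assms(1) unfolding Omega_def by auto
  have tr0: "mtr n (A ^\<^sub>m s * B) = 0" for s by (rule kob_trace[OF assms(1,3,4)])
  obtain z where z: "\<And>q. q \<noteq> 0 \<Longrightarrow> degree q < n \<Longrightarrow> poly_at_mat q A *\<^sub>v vl n z \<noteq> 0\<^sub>v n"
    using cyclic_exists[OF Ac assms(2)] by blast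
  have vc: "vl n z \<in> carrier_vec n" unfolding vl_def by simp
  have dP: "det (mat n n (\<lambda>(i,k). (A ^\<^sub>m k *\<^sub>v vl n z) $ i)) \<noteq> 0"
    by (rule cyclic_det[OF Ac vc z])
  obtain X where Xc: "X \<in> carrier_mat n n" and XB: "X * A - A * X = B"
    using commutator_cyclic[OF Ac vc assms(3) refl dP tr0] by blast
  show ?thesis using construct[OF assms(1) Xc] XB by simp
qed

end
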